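(* Let $u\in R^{\times}$ and $a,b\in R$, and let $\mathcal{B}_{(u,a,b)}$ be the corresponding $H_N^q$-cleft extension of $R$. If $1-q\in R^{\times}$, then there exists $a'\in R$ such that $\mathcal{B}_{(u,a,b)}\cong\mathcal{B}_{(u,a',0)}$ as right $H_N^q$-comodule algebras.
   Context: $R$ is a commutative unital ring, $N\ge2$ an integer, and $q\in R$ a root of the $N$-th cyclotomic polynomial over $\mathbb{Z}$. $H_N^q$ is the Taft Hopf algebra over $R$: generated as an algebra by $g,x$ with $g^N=1$, $x^N=0$, $xg=qgx$, and $\Delta(g)=g\otimes g$, $\Delta(x)=1\otimes x+x\otimes g$, $\varepsilon(g)=1$, $\varepsilon(x)=0$, $S(g)=g^{-1}$, $S(x)=-q^{-1}g^{-1}x$. For $u\in R^{\times}$, $a,b\in R$, $\mathcal{B}_{(u,a,b)}$ is the $R$-algebra generated by $v_g,v_x$ subject to $v_g^N=u$, $v_x^N=a$, $v_xv_g=qv_gv_x+bv_g^2$; it is a free $R$-module with basis $\{v_g^mv_x^n:0\le m,n<N\}$ and a right $H_N^q$-comodule algebra via $v_g\mapsto v_g\otimes g$, $v_x\mapsto 1\otimes x+v_x\otimes g$, and it is an $H_N^q$-cleft extension of $R$ (coinvariants equal to $R$, with a convolution-invertible comodule map $H_N^q\to\mathcal{B}_{(u,a,b)}$, $g^mx^n\mapsto v_g^mv_x^n$). *)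

theory Defs
  imports "HOL-Computational_Algebra.Polynomial"
begin

text \<open>Defined by the standard recursion  X^n - 1 = prod over d dvd n of Phi_d.\<close>

function cyclo :: "nat \<Rightarrow> int poly" where
  "cyclo n = (if n = 0 then 1 else
     (monom 1 n - 1) div (\<Prod>d\<in>{d. d dvd n \<and> d < n}. cyclo d))"
  by auto
termination
  by (relation "measure id") auto

text \<open>An element sum of c(m,n) vg^m vx^n is represented by its coefficient
function c :: nat \<times> nat \<Rightarrow> 'a, which vanishes outside the box.\<close>

definition box :: "nat \<Rightarrow> (nat \<times> nat) set" where
  "box N = {..<N} \<times> {..<N}"

definition carr :: "nat \<Rightarrow> (nat \<times> nat \<Rightarrow> 'a::zero) set" where
  "carr N = {f. \<forall>p. p \<notin> box N \<longrightarrow> f p = 0}"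

definition bas :: "nat \<times> nat \<Rightarrow> nat \<times> nat \<Rightarrow> 'a::zero_neq_one" where
  "bas p = (\<lambda>s. if s = p then 1 else 0)"

definition lin_ext :: "nat \<Rightarrow> (nat \<times> nat \<Rightarrow> nat \<times> nat \<Rightarrow> 'a::comm_ring_1)
    \<Rightarrow> (nat \<times> nat \<Rightarrow> 'a) \<Rightarrow> nat \<times> nat \<Rightarrow> 'a" where
  "lin_ext N T f = (\<lambda>s. \<Sum>p\<in>box N. f p * T p s)"

section \<open>The algebra B_(u,a,b): v_g^N = u, v_x^N = a, v_x v_g = q v_g v_x + b v_g^2\<close>

text \<open>Left multiplication by v_g on the basis element v_g^m v_x^n.\<close>
definition gstep :: "nat \<Rightarrow> 'a::comm_ring_1 \<Rightarrow> nat \<times> nat \<Rightarrow> nat \<times> nat \<Rightarrow> 'a" where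
  "gstep N u p = (if Suc (fst p) = N then (\<lambda>s. u * bas (0, snd p) s)
                  else bas (Suc (fst p), snd p))"

text \<open>Left multiplication by v_x on v_g^m v_x^n, using the consequence of the defining
relation  v_x v_g^m = v_g^m (q^m v_x + b (1 + q + ... + q^(m-1)) v_g).\<close>
definition xstep :: "nat \<Rightarrow> 'a::comm_ring_1 \<Rightarrow> 'a \<Rightarrow> 'a \<Rightarrow> 'a
    \<Rightarrow> nat \<times> nat \<Rightarrow> nat \<times> nat \<Rightarrow> 'a" where
  "xstep N q u a b p = (\<lambda>s.
     q ^ fst p * (if Suc (snd p) = N then a * bas (fst p, 0) s else bas (fst p, Suc (snd p)) s)
     + (b * (\<Sum>k<fst p. q ^ k)) * gstep N u p s)"

definition Bmult :: "nat \<Rightarrow> 'a::comm_ring_1 \<Rightarrow> 'a \<Rightarrow> 'a \<Rightarrow> 'a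
    \<Rightarrow> (nat \<times> nat \<Rightarrow> 'a) \<Rightarrow> (nat \<times> nat \<Rightarrow> 'a) \<Rightarrow> nat \<times> nat \<Rightarrow> 'a" where
  "Bmult N q u a b f h = (\<lambda>s. \<Sum>p\<in>box N.
      f p * ((lin_ext N (gstep N u) ^^ fst p) ((lin_ext N (xstep N q u a b) ^^ snd p) h)) s)"

text \<open>The Taft algebra H_N^q has the same presentation as B_(1,0,0) (g = v_g, x = v_x),
 with basis g^m x^n.\<close>
abbreviation Hmult :: "nat \<Rightarrow> 'a::comm_ring_1
    \<Rightarrow> (nat \<times> nat \<Rightarrow> 'a) \<Rightarrow> (nat \<times> nat \<Rightarrow> 'a) \<Rightarrow> nat \<times> nat \<Rightarrow> 'a" where
  "Hmult N q \<equiv> Bmult N q 1 0 0"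

definition tens :: "(nat \<times> nat \<Rightarrow> 'a::comm_ring_1) \<Rightarrow> (nat \<times> nat \<Rightarrow> 'a)
    \<Rightarrow> (nat \<times> nat) \<times> (nat \<times> nat) \<Rightarrow> 'a" where
  "tens f h = (\<lambda>(s, t). f s * h t)"

definition Tmult :: "nat \<Rightarrow> 'a::comm_ring_1 \<Rightarrow> 'a \<Rightarrow> 'a \<Rightarrow> 'a
    \<Rightarrow> ((nat \<times> nat) \<times> (nat \<times> nat) \<Rightarrow> 'a) \<Rightarrow> ((nat \<times> nat) \<times> (nat \<times> nat) \<Rightarrow> 'a)
    \<Rightarrow> (nat \<times> nat) \<times> (nat \<times> nat) \<Rightarrow> 'a" where
  "Tmult N q u a b F G = (\<lambda>(s, t).
     \<Sum>(p1, r1)\<in>box N \<times> box N. \<Sum>(p2, r2)\<in>box N \<times> box N.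
        F (p1, r1) * G (p2, r2) * Bmult N q u a b (bas p1) (bas p2) s
          * Hmult N q (bas r1) (bas r2) t)"

definition Tpow :: "nat \<Rightarrow> 'a::comm_ring_1 \<Rightarrow> 'a \<Rightarrow> 'a \<Rightarrow> 'a
    \<Rightarrow> ((nat \<times> nat) \<times> (nat \<times> nat) \<Rightarrow> 'a) \<Rightarrow> nat \<Rightarrow> (nat \<times> nat) \<times> (nat \<times> nat) \<Rightarrow> 'a" where
  "Tpow N q u a b F n = (Tmult N q u a b F ^^ n) (tens (bas (0,0)) (bas (0,0)))"

section \<open>The coaction: v_g \<mapsto> v_g \<otimes> g, v_x \<mapsto> 1 \<otimes> x + v_x \<otimes> g, extended multiplicatively\<close>

definition rho_g :: "(nat \<times> nat) \<times> (nat \<times> nat) \<Rightarrow> 'a::comm_ring_1" where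
  "rho_g = tens (bas (1,0)) (bas (1,0))"

definition rho_x :: "(nat \<times> nat) \<times> (nat \<times> nat) \<Rightarrow> 'a::comm_ring_1" where
  "rho_x = (\<lambda>z. tens (bas (0,0)) (bas (0,1)) z + tens (bas (0,1)) (bas (1,0)) z)"

definition coact :: "nat \<Rightarrow> 'a::comm_ring_1 \<Rightarrow> 'a \<Rightarrow> 'a \<Rightarrow> 'a
    \<Rightarrow> (nat \<times> nat \<Rightarrow> 'a) \<Rightarrow> (nat \<times> nat) \<times> (nat \<times> nat) \<Rightarrow> 'a" where
  "coact N q u a b f = (\<lambda>z. \<Sum>p\<in>box N.
      f p * Tmult N q u a b (Tpow N q u a b rho_g (fst p)) (Tpow N q u a b rho_x (snd p)) z)"

definition tens_id :: "nat \<Rightarrow> ((nat \<times> nat \<Rightarrow> 'a::comm_ring_1) \<Rightarrow> (nat \<times> nat \<Rightarrow> 'a))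
    \<Rightarrow> ((nat \<times> nat) \<times> (nat \<times> nat) \<Rightarrow> 'a) \<Rightarrow> (nat \<times> nat) \<times> (nat \<times> nat) \<Rightarrow> 'a" where
  "tens_id N \<phi> F = (\<lambda>(s, t). \<Sum>p\<in>box N. F (p, t) * \<phi> (bas p) s)"

definition comod_alg_iso :: "nat \<Rightarrow> 'a::comm_ring_1 \<Rightarrow> 'a \<times> 'a \<times> 'a \<Rightarrow> 'a \<times> 'a \<times> 'a
    \<Rightarrow> ((nat \<times> nat \<Rightarrow> 'a) \<Rightarrow> (nat \<times> nat \<Rightarrow> 'a)) \<Rightarrow> bool" where
  "comod_alg_iso N q P P' \<phi> \<longleftrightarrow>
     (case P of (u, a, b) \<Rightarrow> case P' of (u', a', b') \<Rightarrow>
       bij_betw \<phi> (carr N) (carr N)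
     \<and> (\<forall>f\<in>carr N. \<forall>h\<in>carr N. \<phi> (\<lambda>s. f s + h s) = (\<lambda>s. \<phi> f s + \<phi> h s))
     \<and> (\<forall>c. \<forall>f\<in>carr N. \<phi> (\<lambda>s. c * f s) = (\<lambda>s. c * \<phi> f s))
     \<and> \<phi> (bas (0,0)) = bas (0,0)
     \<and> (\<forall>f\<in>carr N. \<forall>h\<in>carr N.
          \<phi> (Bmult N q u a b f h) = Bmult N q u' a' b' (\<phi> f) (\<phi> h))
     \<and> (\<forall>f\<in>carr N. coact N q u' a' b' (\<phi> f) = tens_id N \<phi> (coact N q u a b f)))"

end

theory Submission
  imports Defs Complex_Main
begin


declare cyclo.simps[simp del]

lemma mp_X: "map_poly (of_int::int\<Rightarrow>'a::comm_ring_1) [:0,1:] = [:0,1:]"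
  by (rule poly_eqI) (simp add: coeff_map_poly coeff_pCons split: nat.split)

lemma mp_add: "map_poly (of_int::int\<Rightarrow>'a::comm_ring_1) (p + q) = map_poly of_int p + map_poly of_int q"
  by (rule poly_eqI) (simp add: coeff_map_poly)
lemma mp_diff: "map_poly (of_int::int\<Rightarrow>'a::comm_ring_1) (p - q) = map_poly of_int p - map_poly of_int q"
  by (rule poly_eqI) (simp add: coeff_map_poly)
lemma mp_mult: "map_poly (of_int::int\<Rightarrow>'a::comm_ring_1) (p * q) = map_poly of_int p * map_poly of_int q"
  by (rule poly_eqI) (simp add: coeff_map_poly coeff_mult of_int_sum)
lemma mp_one: "map_poly (of_int::int\<Rightarrow>'a::comm_ring_1) 1 = 1"
  by simp
lemma mp_prod: "map_poly (of_int::int\<Rightarrow>'a::comm_ring_1) (\<Prod>i\<in>A. f i) = (\<Prod>i\<in>A. map_poly of_int (f i))"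
  by (induction A rule: infinite_finite_induct) (auto simp: mp_mult)
lemma mp_monom: "map_poly (of_int::int\<Rightarrow>'a::comm_ring_1) (monom c n) = monom (of_int c) n"
  by (simp add: map_poly_monom)
lemma mp_pow: "map_poly (of_int::int\<Rightarrow>'a::comm_ring_1) (p ^ n) = (map_poly of_int p) ^ n"
  by (induction n) (auto simp: mp_mult)

lemma mp_transfer:
  fixes d p :: "int poly"
  assumes lc: "lead_coeff d = 1"
    and dv: "map_poly (of_int::int\<Rightarrow>complex) d dvd map_poly of_int p"
  shows "d dvd p"
proof -
  have d0: "d \<noteq> 0" using lc by auto
  obtain Q R where qr: "pseudo_divmod p d = (Q, R)" by (cases "pseudo_divmod p d") auto
  from pseudo_divmod[OF d0 qr] lc have eq: "p = d * Q + R" and deg: "R = 0 \<or> degree R < degree d"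
    by auto
  have "map_poly (of_int::int\<Rightarrow>complex) p = map_poly of_int d * map_poly of_int Q + map_poly of_int R"
    using eq by (simp add: mp_add mp_mult)
  hence "map_poly (of_int::int\<Rightarrow>complex) d dvd map_poly of_int R"
    using dv by (metis dvd_add_right_iff dvd_triv_left)
  moreover have "R = 0"
  proof (rule ccontr)
    assume R0: "R \<noteq> 0"
    have m0: "map_poly (of_int::int\<Rightarrow>complex) R \<noteq> 0"
      using R0 by (subst map_poly_eq_0_iff) auto
    have dR: "degree (map_poly (of_int::int\<Rightarrow>complex) R) = degree R"
      using R0 by (intro map_poly_degree_eq) auto
    have dd: "degree (map_poly (of_int::int\<Rightarrow>complex) d) = degree d"
      using lc by (intro map_poly_degree_eq) auto
    from calculation m0 have "degree (map_poly (of_int::int\<Rightarrow>complex) d) \<le> degree (map_poly (of_int::int\<Rightarrow>complex) R)"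
      by (rule dvd_imp_degree_le)
    with dR dd deg R0 show False by auto
  qed
  ultimately show ?thesis using eq by simp
qed

lemma prod_roots_dvd:
  fixes p :: "'a::field poly"
  assumes "finite S" "\<forall>s\<in>S. poly p s = 0"
  shows "(\<Prod>s\<in>S. [:-s,1:]) dvd p"
  using assms
proof (induction S rule: finite_induct)
  case empty then show ?case by simp
next
  case (insert x F)
  then obtain r where r: "p = (\<Prod>s\<in>F. [:-s,1:]) * r" by (auto elim: dvdE)
  have "poly (\<Prod>s\<in>F. [:-s,1:]) x \<noteq> 0"
    using insert(1,2) by (auto simp: poly_prod)
  moreover have "poly p x = 0" using insert by auto
  ultimately have "poly r x = 0" using r by simp
  hence "[:-x,1:] dvd r" by (simp add: poly_eq_0_iff_dvd)
  hence "[:-x,1:] * (\<Prod>s\<in>F. [:-s,1:]) dvd r * (\<Prod>s\<in>F. [:-s,1:])"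
    by (rule mult_dvd_mono) simp
  then show ?case using insert(1,2) r by (simp add: mult.commute)
qed

definition prim :: "nat \<Rightarrow> complex set" where
  "prim n = {z. z ^ n = 1 \<and> (\<forall>d. 0 < d \<and> d < n \<longrightarrow> z ^ d \<noteq> 1)}"

lemma prim_finite: "n > 0 \<Longrightarrow> finite (prim n)"
  by (rule finite_subset[of _ "{z. z ^ n = 1}"]) (auto simp: prim_def intro: finite_roots_unity)

lemma prim_disj: "0 < d \<Longrightarrow> 0 < e \<Longrightarrow> d \<noteq> e \<Longrightarrow> prim d \<inter> prim e = {}"
  unfolding prim_def by (cases "d < e") auto

lemma unity_decomp:
  assumes n: "n > 0"
  shows "{z::complex. z ^ n = 1} = (\<Union>d\<in>{d. d dvd n}. prim d)"
proof
  show "(\<Union>d\<in>{d. d dvd n}. prim d) \<subseteq> {z. z ^ n = 1}"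
    by (auto simp: prim_def power_mult elim!: dvdE)
next
  show "{z. z ^ n = 1} \<subseteq> (\<Union>d\<in>{d. d dvd n}. prim d)"
  proof
    fix z :: complex assume z: "z \<in> {z. z ^ n = 1}"
    define d where "d = (LEAST d. 0 < d \<and> z ^ d = 1)"
    have ex: "0 < n \<and> z ^ n = 1" using z n by auto
    have d1: "0 < d \<and> z ^ d = 1" unfolding d_def by (rule LeastI[of _ n]) (rule ex)
    have d2: "\<And>e. 0 < e \<and> z ^ e = 1 \<Longrightarrow> d \<le> e" unfolding d_def by (rule Least_le)
    have "z ^ n = z ^ (d * (n div d) + n mod d)" by simp
    also have "\<dots> = (z ^ d) ^ (n div d) * z ^ (n mod d)"
      by (simp only: power_add power_mult)
    finally have "z ^ n = (z ^ d) ^ (n div d) * z ^ (n mod d)" .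
    hence zm: "z ^ (n mod d) = 1" using d1 ex by simp
    have "n mod d = 0"
    proof (rule ccontr)
      assume "n mod d \<noteq> 0"
      hence "d \<le> n mod d" using d2 zm by auto
      moreover have "n mod d < d" using d1 by auto
      ultimately show False by simp
    qed
    hence "d dvd n" by auto
    moreover have "z \<in> prim d" using d1 d2 unfolding prim_def by force
    ultimately show "z \<in> (\<Union>d\<in>{d. d dvd n}. prim d)" by auto
  qed
qed

lemma unity_poly:
  assumes n: "n > 0"
  shows "(monom 1 n - 1 :: complex poly) = (\<Prod>z\<in>{z::complex. z ^ n = 1}. [:-z,1:])"
proof (rule poly_eqI_degree_lead_coeff[where n = n and A = "{z::complex. z ^ n = 1}"])
  have fin: "finite {z::complex. z ^ n = 1}" using n by (intro finite_roots_unity) auto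
  have card: "card {z::complex. z ^ n = 1} = n" using n by (rule card_roots_unity_eq)
  have dg: "degree (\<Prod>z\<in>{z::complex. z ^ n = 1}. [:-z,1:]) = n"
    using fin card by (subst degree_prod_eq_sum_degree) auto
  have lc: "lead_coeff (\<Prod>z\<in>{z::complex. z ^ n = 1}. [:-z,1:]) = 1"
    by (simp add: lead_coeff_prod)
  show "coeff (monom 1 n - 1 :: complex poly) n = coeff (\<Prod>z\<in>{z::complex. z ^ n = 1}. [:-z,1:]) n"
    using lc dg n by (simp add: coeff_monom)
  show "n \<le> card {z::complex. z ^ n = 1}" using card by simp
  show "degree (monom 1 n - 1 :: complex poly) \<le> n"
    by (rule order.trans[OF degree_diff_le_max]) (auto simp: degree_monom_le)
  show "degree (\<Prod>z\<in>{z::complex. z ^ n = 1}. [:-z,1:]) \<le> n" using dg by simp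
  fix z :: complex assume "z \<in> {z::complex. z ^ n = 1}"
  then show "poly (monom 1 n - 1) z = poly (\<Prod>z\<in>{z::complex. z ^ n = 1}. [:-z,1:]) z"
    using fin by (auto simp: poly_monom poly_prod)
qed

lemma lc_Xn: "n > 0 \<Longrightarrow> lead_coeff (monom 1 n - 1 :: int poly) = 1"
proof -
  assume n: "n > 0"
  have c: "coeff (monom 1 n - 1 :: int poly) n = 1" using n by (simp add: coeff_monom)
  have "degree (monom 1 n - 1 :: int poly) \<le> n"
    by (rule order.trans[OF degree_diff_le_max]) (auto simp: degree_monom_le)
  moreover have "n \<le> degree (monom 1 n - 1 :: int poly)" using c by (intro le_degree) simp
  ultimately show ?thesis using c by simp
qed

lemma cyclo_main:
  "n > 0 \<Longrightarrow> lead_coeff (cyclo n) = 1 \<and>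
     map_poly (of_int::int\<Rightarrow>complex) (cyclo n) = (\<Prod>z\<in>prim n. [:-z,1:])"
proof (induction n rule: less_induct)
  case (less n)
  define S where "S = {d. d dvd n \<and> d < n}"
  define D where "D = (\<Prod>d\<in>S. cyclo d)"
  have finS: "finite S" unfolding S_def by (rule finite_subset[of _ "{..<n}"]) auto
  have Spos: "\<And>d. d \<in> S \<Longrightarrow> 0 < d \<and> d < n"
    unfolding S_def using less.prems by (auto intro: Nat.gr0I)
  have IH: "\<And>d. d \<in> S \<Longrightarrow> lead_coeff (cyclo d) = 1 \<and>
     map_poly (of_int::int\<Rightarrow>complex) (cyclo d) = (\<Prod>z\<in>prim d. [:-z,1:])"
    using Spos less.IH by blast
  have lcD: "lead_coeff D = 1" unfolding D_def using IH by (simp add: lead_coeff_prod)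
  have "map_poly (of_int::int\<Rightarrow>complex) D = (\<Prod>d\<in>S. \<Prod>z\<in>prim d. [:-z,1:])"
    unfolding D_def mp_prod using IH by simp
  also have "\<dots> = (\<Prod>z\<in>(\<Union>d\<in>S. prim d). [:-z,1:])"
    by (rule prod.UNION_disjoint[symmetric]) (use finS Spos prim_finite prim_disj in auto)
  finally have mD: "map_poly (of_int::int\<Rightarrow>complex) D = (\<Prod>z\<in>(\<Union>d\<in>S. prim d). [:-z,1:])" .
  have U: "{z::complex. z ^ n = 1} = (\<Union>d\<in>S. prim d) \<union> prim n"
  proof -
    have "{z::complex. z ^ n = 1} = (\<Union>d\<in>{d. d dvd n}. prim d)" by (rule unity_decomp[OF less.prems])
    also have "{d. d dvd n} = insert n S" unfolding S_def using less.prems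
      by (auto dest: dvd_imp_le)
    finally show ?thesis by auto
  qed
  have disj: "(\<Union>d\<in>S. prim d) \<inter> prim n = {}"
  proof -
    have "\<And>d. d \<in> S \<Longrightarrow> prim d \<inter> prim n = {}"
      using Spos less.prems by (intro prim_disj) auto
    then show ?thesis by blast
  qed
  have fin1: "finite (\<Union>d\<in>S. prim d)" using finS Spos prim_finite by auto
  have fin2: "finite (prim n)" using prim_finite less.prems by auto
  have "map_poly (of_int::int\<Rightarrow>complex) (monom 1 n - 1) = monom 1 n - 1"
    by (simp add: mp_diff mp_monom)
  also have "\<dots> = (\<Prod>z\<in>{z::complex. z ^ n = 1}. [:-z,1:])" by (rule unity_poly[OF less.prems])
  also have "\<dots> = map_poly of_int D * (\<Prod>z\<in>prim n. [:-z,1:])"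
    unfolding U mD by (rule prod.union_disjoint[OF fin1 fin2 disj])
  finally have eqX: "map_poly (of_int::int\<Rightarrow>complex) (monom 1 n - 1) = map_poly of_int D * (\<Prod>z\<in>prim n. [:-z,1:])" .
  have Ddvd: "D dvd monom 1 n - 1"
    by (rule mp_transfer[OF lcD]) (simp add: eqX)
  have cy: "cyclo n = (monom 1 n - 1) div D"
    unfolding D_def S_def using less.prems by (subst cyclo.simps) simp
  have Dc: "D * cyclo n = monom 1 n - 1" unfolding cy using Ddvd by simp
  have mD0: "map_poly (of_int::int\<Rightarrow>complex) D \<noteq> 0"
    unfolding mD using fin1 by (auto simp: prod_zero_iff)
  have "map_poly (of_int::int\<Rightarrow>complex) D * map_poly of_int (cyclo n) = map_poly of_int D * (\<Prod>z\<in>prim n. [:-z,1:])"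
    unfolding mp_mult[symmetric] Dc eqX ..
  hence m: "map_poly (of_int::int\<Rightarrow>complex) (cyclo n) = (\<Prod>z\<in>prim n. [:-z,1:])"
    using mD0 by simp
  have "lead_coeff (cyclo n) = lead_coeff (D * cyclo n)" using lcD by (simp add: lead_coeff_mult)
  also have "\<dots> = 1" unfolding Dc using lc_Xn[OF less.prems] .
  finally show ?case using m by simp
qed

fun gb :: "'a::comm_ring_1 \<Rightarrow> nat \<Rightarrow> nat \<Rightarrow> 'a" where
  "gb q n 0 = 1"
| "gb q 0 (Suc k) = 0"
| "gb q (Suc n) (Suc k) = gb q n k + q ^ Suc k * gb q n (Suc k)"

lemma gb_map: "poly (map_poly (of_int::int\<Rightarrow>'a::comm_ring_1) (gb [:0,1:] n k)) x = gb x n k"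
proof (induction "[:0,1::int:]" n k rule: gb.induct)
  case (3 n k)
  have "poly (map_poly (of_int::int\<Rightarrow>'a::comm_ring_1) (gb [:0,1:] (Suc n) (Suc k))) x
     = poly (map_poly of_int (gb [:0,1:] n k)) x + poly (map_poly of_int [:0,1:]) x ^ Suc k * poly (map_poly of_int (gb [:0,1:] n (Suc k))) x"
    by (simp only: gb.simps mp_add mp_mult mp_pow poly_add poly_mult poly_power)
  also have "\<dots> = gb x (Suc n) (Suc k)" using 3 by (simp add: mp_X)
  finally show ?case .
qed simp_all

lemma gb_zero: "n < k \<Longrightarrow> gb q n k = 0"
proof (induction n arbitrary: k)
  case 0 then show ?case by (cases k) auto
next
  case (Suc n) then show ?case by (cases k) auto
qed

lemma gb_prod: "k \<le> n \<Longrightarrow> gb q n k * (\<Prod>j<k. q ^ Suc j - 1) = (\<Prod>j<k. q ^ (n - j) - 1)"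
proof (induction n arbitrary: k)
  case 0 then show ?case by simp
next
  case (Suc n)
  show ?case
  proof (cases k)
    case 0 then show ?thesis by simp
  next
    case (Suc k')
    have k'n: "k' \<le> n" using Suc.prems Suc by simp
    have H: "(\<Prod>j<Suc k'. q ^ (Suc n - j) - 1) = (q ^ Suc n - 1) * (\<Prod>j<k'. q ^ (n - j) - 1)"
      by (subst prod.lessThan_Suc_shift) simp
    have A: "gb q n k' * (\<Prod>j<Suc k'. q ^ Suc j - 1) = (\<Prod>j<k'. q ^ (n - j) - 1) * (q ^ Suc k' - 1)"
      using Suc.IH[OF k'n] by (simp add: mult.assoc[symmetric])
    show ?thesis
    proof (cases "k' = n")
      case True
      have z: "gb q n (Suc k') = 0" using True by (simp add: gb_zero)
      have "gb q (Suc n) k * (\<Prod>j<k. q ^ Suc j - 1) = gb q n k' * (\<Prod>j<Suc k'. q ^ Suc j - 1)"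
        using Suc z by simp
      also have "\<dots> = (\<Prod>j<Suc k'. q ^ (Suc n - j) - 1)" unfolding A H using True by simp
      finally show ?thesis using Suc by simp
    next
      case False
      hence kn: "Suc k' \<le> n" using k'n by simp
      have B: "gb q n (Suc k') * (\<Prod>j<Suc k'. q ^ Suc j - 1) = (\<Prod>j<k'. q ^ (n - j) - 1) * (q ^ (n - k') - 1)"
        using Suc.IH[OF kn] by simp
      have e1: "Suc k' + (n - k') = Suc n" using kn by simp
      have pw: "q ^ Suc k' * q ^ (n - k') = q ^ Suc n"
        unfolding power_add[symmetric] e1 ..
      have "gb q (Suc n) k * (\<Prod>j<k. q ^ Suc j - 1)
          = gb q n k' * (\<Prod>j<Suc k'. q ^ Suc j - 1) + q ^ Suc k' * (gb q n (Suc k') * (\<Prod>j<Suc k'. q ^ Suc j - 1))"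
        using Suc by (simp add: algebra_simps)
      also have "\<dots> = (\<Prod>j<k'. q ^ (n - j) - 1) * ((q ^ Suc k' - 1) + q ^ Suc k' * q ^ (n - k') - q ^ Suc k')"
        unfolding A B by (simp add: algebra_simps)
      also have "\<dots> = (\<Prod>j<k. q ^ (Suc n - j) - 1)"
        unfolding pw Suc H by (simp add: algebra_simps)
      finally show ?thesis .
    qed
  qed
qed

lemma gb_vanish_C:
  assumes z: "z \<in> prim N" and k: "0 < k" "k < N"
  shows "gb z N k = 0"
proof -
  have e: "gb z N k * (\<Prod>j<k. z ^ Suc j - 1) = (\<Prod>j<k. z ^ (N - j) - 1)"
    using k by (intro gb_prod) simp
  have H0: "(\<Prod>j<k. z ^ (N - j) - 1) = 0"
    using k z by (intro prod_zero) (auto intro!: bexI[of _ 0] simp: prim_def)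
  have F0: "(\<Prod>j<k. z ^ Suc j - 1) \<noteq> 0"
  proof
    assume "(\<Prod>j<k. z ^ Suc j - 1) = 0"
    then obtain j where j: "j < k" "z ^ Suc j - 1 = 0" by (auto simp: prod_zero_iff)
    have "0 < Suc j \<and> Suc j < N" using j k by simp
    then have "z ^ Suc j \<noteq> 1" using z unfolding prim_def by blast
    then show False using j by simp
  qed
  have "gb z N k * (\<Prod>j<k. z ^ Suc j - 1) = 0" using trans[OF e H0] .
  with F0 show ?thesis by (metis mult_eq_0_iff)
qed

lemma gb_vanish:
  fixes q :: "'a::comm_ring_1"
  assumes N: "N \<ge> 2" and q: "poly (map_poly of_int (cyclo N)) q = 0"
    and k: "0 < k" "k < N"
  shows "gb q N k = 0"
proof -
  have cm: "lead_coeff (cyclo N) = 1 \<and>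
     map_poly (of_int::int\<Rightarrow>complex) (cyclo N) = (\<Prod>z\<in>prim N. [:-z,1:])"
    using N by (intro cyclo_main) simp
  have "cyclo N dvd gb [:0,1:] N k"
  proof (rule mp_transfer)
    show "lead_coeff (cyclo N) = 1" using cm by simp
    show "map_poly complex_of_int (cyclo N) dvd map_poly complex_of_int (gb [:0, 1:] N k)"
      unfolding cm[THEN conjunct2] using N
      by (intro prod_roots_dvd prim_finite) (auto simp: gb_map gb_vanish_C k)
  qed
  then obtain Q where Q: "gb [:0,1:] N k = cyclo N * Q" by (auto elim: dvdE)
  have "gb q N k = poly (map_poly of_int (gb [:0,1:] N k)) q" by (simp add: gb_map)
  also have "\<dots> = 0" unfolding Q mp_mult by (simp only: poly_mult q mult_zero_left)
  finally show ?thesis .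
qed

lemma gb_one: "gb q n 1 = (\<Sum>j<n. q ^ j)"
proof (induction n)
  case 0 then show ?case by simp
next
  case (Suc n)
  have "gb q (Suc n) 1 = 1 + q * gb q n 1" by (simp add: numeral_eq_Suc)
  also have "\<dots> = (\<Sum>j<Suc n. q ^ j)" unfolding Suc sum.lessThan_Suc_shift
    by (simp add: sum_distrib_left)
  finally show ?case .
qed

lemma qfacts:
  fixes q :: "'a::comm_ring_1"
  assumes N: "N \<ge> 2" and q: "poly (map_poly of_int (cyclo N)) q = 0"
  shows "(\<Sum>j<N. q ^ j) = 0" and "q ^ N = 1"
proof -
  show s: "(\<Sum>j<N. q ^ j) = 0" using gb_vanish[OF N q, of 1] gb_one[of q N] N by simp
  have "(1 - q) * (\<Sum>j<N. q ^ j) = 1 - q ^ N" by (rule one_diff_power_eq[symmetric])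
  then show "q ^ N = 1" using s by simp
qed


definition bs :: "'i \<Rightarrow> 'i \<Rightarrow> 'a::comm_ring_1" where
  "bs p = (\<lambda>s. if s = p then 1 else 0)"

definition CI :: "'i set \<Rightarrow> ('i \<Rightarrow> 'a::comm_ring_1) set" where
  "CI I = {f. \<forall>p. p \<notin> I \<longrightarrow> f p = 0}"

definition ulin :: "(('i \<Rightarrow> 'a::comm_ring_1) \<Rightarrow> ('j \<Rightarrow> 'a)) \<Rightarrow> bool" where
  "ulin A \<longleftrightarrow> (\<forall>f g. A (\<lambda>s. f s + g s) = (\<lambda>s. A f s + A g s)) \<and>
               (\<forall>c f. A (\<lambda>s. c * f s) = (\<lambda>s. c * A f s))"

definition pres :: "'i set \<Rightarrow> (('i \<Rightarrow> 'a::comm_ring_1) \<Rightarrow> ('i \<Rightarrow> 'a)) \<Rightarrow> bool" where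
  "pres I A \<longleftrightarrow> (\<forall>f\<in>CI I. A f \<in> CI I)"

lemma ulin_add: "ulin A \<Longrightarrow> A (\<lambda>s. f s + g s) = (\<lambda>s. A f s + A g s)"
  unfolding ulin_def by blast
lemma ulin_scal: "ulin A \<Longrightarrow> A (\<lambda>s. c * f s) = (\<lambda>s. c * A f s)"
  unfolding ulin_def by blast
lemma ulin_zero: "ulin A \<Longrightarrow> A (\<lambda>s. 0) = (\<lambda>s. 0)"
  using ulin_scal[of A 0 "\<lambda>s. 0"] by simp

lemma ulin_sum:
  assumes "ulin A"
  shows "A (\<lambda>s. \<Sum>k\<in>K. c k * g k s) = (\<lambda>s. \<Sum>k\<in>K. c k * A (g k) s)"
proof (induction K rule: infinite_finite_induct)
  case (infinite K) then show ?case using ulin_zero[OF assms] by simp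
next
  case empty then show ?case using ulin_zero[OF assms] by simp
next
  case (insert x F)
  have "A (\<lambda>s. \<Sum>k\<in>insert x F. c k * g k s) = A (\<lambda>s. c x * g x s + (\<Sum>k\<in>F. c k * g k s))"
    using insert by simp
  also have "\<dots> = (\<lambda>s. c x * A (g x) s + (\<Sum>k\<in>F. c k * A (g k) s))"
    using insert ulin_add[OF assms] ulin_scal[OF assms] by simp
  finally show ?case using insert by simp
qed

lemma ulin_id: "ulin (\<lambda>f. f)" unfolding ulin_def by simp
lemma ulin_id': "ulin id" unfolding ulin_def by simp
lemma ulin_comp: "ulin A \<Longrightarrow> ulin B \<Longrightarrow> ulin (\<lambda>f. A (B f))"
  unfolding ulin_def by simp
lemma ulin_comp': "ulin A \<Longrightarrow> ulin B \<Longrightarrow> ulin (A \<circ> B)"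
  unfolding ulin_def by simp
lemma ulin_pow: "ulin (A :: ('i \<Rightarrow> 'a::comm_ring_1) \<Rightarrow> ('i \<Rightarrow> 'a)) \<Longrightarrow> ulin (A ^^ n)"
proof (induction n)
  case 0
  have "A ^^ 0 = id" by (rule ext) simp
  then show ?case using ulin_id' by metis
next
  case (Suc n)
  have "A ^^ Suc n = A \<circ> A ^^ n" by (rule ext) simp
  then show ?case using Suc ulin_comp' by metis
qed
lemma ulin_plus: "ulin A \<Longrightarrow> ulin B \<Longrightarrow> ulin (\<lambda>f s. A f s + B f s)"
  unfolding ulin_def by (simp add: algebra_simps)
lemma ulin_smul: "ulin A \<Longrightarrow> ulin (\<lambda>f s. c * A f s)"
  unfolding ulin_def by (simp add: algebra_simps)

lemma CI_expand:
  fixes f :: "'i \<Rightarrow> 'a::comm_ring_1"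
  assumes "finite I" "f \<in> CI I"
  shows "f = (\<lambda>s. \<Sum>p\<in>I. f p * bs p s)"
proof
  fix s
  show "f s = (\<Sum>p\<in>I. f p * bs p s)"
  proof (cases "s \<in> I")
    case True
    have "(\<lambda>p. f p * bs p s) = (\<lambda>p. if p = s then f s else 0)" by (auto simp: bs_def)
    have "(\<Sum>p\<in>I. f p * bs p s) = (\<Sum>p\<in>I. if p = s then f s else 0)"
      by (rule sum.cong) (auto simp: bs_def)
    also have "\<dots> = f s" using True assms(1) by (simp add: sum.delta)
    finally show ?thesis by simp
  next
    case False
    then have "\<forall>p\<in>I. bs p s = (0::'a)" by (auto simp: bs_def)
    then show ?thesis using False assms by (simp add: CI_def)
  qed
qed

lemma bs_CI: "p \<in> I \<Longrightarrow> bs p \<in> CI I"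
  by (auto simp: CI_def bs_def)

lemma CI_add: "f \<in> CI I \<Longrightarrow> g \<in> CI I \<Longrightarrow> (\<lambda>s. f s + g s) \<in> CI I"
  by (auto simp: CI_def)
lemma CI_scal: "f \<in> CI I \<Longrightarrow> (\<lambda>s. c * f s) \<in> CI I"
  by (auto simp: CI_def)
lemma CI_zero: "(\<lambda>s. 0) \<in> CI I"
  by (auto simp: CI_def)
lemma CI_sum: "(\<And>k. k \<in> K \<Longrightarrow> g k \<in> CI I) \<Longrightarrow> (\<lambda>s. \<Sum>k\<in>K. c k * g k s) \<in> CI I"
  by (auto simp: CI_def intro!: sum.neutral)

lemma pres_id: "pres I (\<lambda>f. f)" by (simp add: pres_def)
lemma pres_id': "pres I id" by (simp add: pres_def)
lemma pres_comp: "pres I A \<Longrightarrow> pres I B \<Longrightarrow> pres I (\<lambda>f. A (B f))" by (simp add: pres_def)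
lemma pres_comp': "pres I A \<Longrightarrow> pres I B \<Longrightarrow> pres I (A \<circ> B)" by (simp add: pres_def)
lemma pres_pow: "pres I A \<Longrightarrow> pres I (A ^^ n)"
proof (induction n)
  case 0
  have "A ^^ 0 = id" by (rule ext) simp
  then show ?case using pres_id' by metis
next
  case (Suc n)
  have "A ^^ Suc n = A \<circ> A ^^ n" by (rule ext) simp
  then show ?case using Suc pres_comp' by metis
qed
lemma pres_plus: "pres I A \<Longrightarrow> pres I B \<Longrightarrow> pres I (\<lambda>f s. A f s + B f s)"
  by (simp add: pres_def CI_add)
lemma pres_smul: "pres I A \<Longrightarrow> pres I (\<lambda>f s. c * A f s)"
  by (simp add: pres_def CI_scal)
lemma presD: "pres I A \<Longrightarrow> f \<in> CI I \<Longrightarrow> A f \<in> CI I" by (simp add: pres_def)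

lemma ulin_eq:
  assumes "finite I" "ulin A" "ulin B" "\<And>p. p \<in> I \<Longrightarrow> A (bs p) = B (bs p)" "f \<in> CI I"
  shows "A f = B f"
proof -
  have "A f = A (\<lambda>s. \<Sum>p\<in>I. f p * bs p s)" using CI_expand[OF assms(1,5)] by simp
  also have "\<dots> = (\<lambda>s. \<Sum>p\<in>I. f p * A (bs p) s)" by (rule ulin_sum[OF assms(2)])
  also have "\<dots> = (\<lambda>s. \<Sum>p\<in>I. f p * B (bs p) s)" using assms(4) by simp
  also have "\<dots> = B (\<lambda>s. \<Sum>p\<in>I. f p * bs p s)" by (rule ulin_sum[OF assms(3), symmetric])
  also have "\<dots> = B f" using CI_expand[OF assms(1,5)] by simp
  finally show ?thesis .
qed

lemma comm_pow:
  assumes "ulin A" "pres I A" "\<And>f. f \<in> CI I \<Longrightarrow> B (A f) = (\<lambda>s. q * A (B f) s)" "f \<in> CI I"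
  shows "B ((A ^^ k) f) = (\<lambda>s. q ^ k * (A ^^ k) (B f) s)"
  using assms(4)
proof (induction k arbitrary: f)
  case 0 then show ?case by simp
next
  case (Suc k)
  have "B ((A ^^ Suc k) f) = B (A ((A ^^ k) f))" by simp
  also have "\<dots> = (\<lambda>s. q * A (B ((A ^^ k) f)) s)"
    using assms(3) presD[OF pres_pow[OF assms(2)] Suc.prems] by simp
  also have "\<dots> = (\<lambda>s. q * A (\<lambda>s. q ^ k * (A ^^ k) (B f) s) s)" using Suc by simp
  also have "\<dots> = (\<lambda>s. q ^ Suc k * (A ^^ Suc k) (B f) s)"
    using ulin_scal[OF assms(1)] by (simp add: mult.assoc)
  finally show ?case .
qed

lemma qbinom:
  assumes A: "ulin A" "pres I A" and B: "ulin B" "pres I B"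
    and comm: "\<And>f. f \<in> CI I \<Longrightarrow> B (A f) = (\<lambda>s. q * A (B f) s)" and f: "f \<in> CI I"
  shows "((\<lambda>g s. A g s + B g s) ^^ n) f = (\<lambda>s. \<Sum>k\<le>n. gb q n k * (A ^^ k) ((B ^^ (n - k)) f) s)"
proof (induction n)
  case 0 then show ?case by simp
next
  case (Suc n)
  have CP: "\<And>g k. g \<in> CI I \<Longrightarrow> B ((A ^^ k) g) = (\<lambda>s. q ^ k * (A ^^ k) (B g) s)"
    by (rule comm_pow[where A=A and B=B and I=I and q=q]) (simp_all add: A comm)
  define T where "T = (\<lambda>k. (A ^^ k) ((B ^^ (Suc n - k)) f))"
  have TC: "\<And>k j. (A ^^ k) ((B ^^ j) f) \<in> CI I"
    using f by (intro presD[OF pres_pow] A B)+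
  have "((\<lambda>g s. A g s + B g s) ^^ Suc n) f = (\<lambda>s. A (\<lambda>s. \<Sum>k\<le>n. gb q n k * (A ^^ k) ((B ^^ (n - k)) f) s) s
        + B (\<lambda>s. \<Sum>k\<le>n. gb q n k * (A ^^ k) ((B ^^ (n - k)) f) s) s)"
    using Suc by simp
  also have "\<dots> = (\<lambda>s. (\<Sum>k\<le>n. gb q n k * A ((A ^^ k) ((B ^^ (n - k)) f)) s)
        + (\<Sum>k\<le>n. gb q n k * B ((A ^^ k) ((B ^^ (n - k)) f)) s))"
    by (simp add: ulin_sum[OF A(1)] ulin_sum[OF B(1)])
  also have "\<dots> = (\<lambda>s. (\<Sum>k\<le>n. gb q n k * T (Suc k) s) + (\<Sum>k\<le>n. gb q n k * q ^ k * T k s))"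
  proof -
    have 1: "\<And>k. k \<le> n \<Longrightarrow> A ((A ^^ k) ((B ^^ (n - k)) f)) = T (Suc k)"
      unfolding T_def by simp
    have 2: "\<And>k. k \<le> n \<Longrightarrow> B ((A ^^ k) ((B ^^ (n - k)) f)) = (\<lambda>s. q ^ k * T k s)"
    proof -
      fix k assume k: "k \<le> n"
      have "B ((A ^^ k) ((B ^^ (n - k)) f)) = (\<lambda>s. q ^ k * (A ^^ k) (B ((B ^^ (n - k)) f)) s)"
        using CP[OF presD[OF pres_pow[OF B(2)] f]] .
      also have "B ((B ^^ (n - k)) f) = (B ^^ (Suc n - k)) f"
        using k by (simp add: Suc_diff_le)
      finally show "B ((A ^^ k) ((B ^^ (n - k)) f)) = (\<lambda>s. q ^ k * T k s)" unfolding T_def .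
    qed
    show ?thesis
      by (rule ext, intro arg_cong2[where f = "(+)"] sum.cong) (auto simp: 1 2 mult.assoc)
  qed
  also have "\<dots> = (\<lambda>s. \<Sum>k\<le>Suc n. gb q (Suc n) k * T k s)"
  proof
    fix s
    have z: "gb q n (Suc n) = 0" by (simp add: gb_zero)
    have "(\<Sum>k\<le>Suc n. gb q (Suc n) k * T k s) = T 0 s + (\<Sum>k\<le>n. gb q (Suc n) (Suc k) * T (Suc k) s)"
      by (subst sum.atMost_Suc_shift) simp
    also have "\<dots> = T 0 s + (\<Sum>k\<le>n. gb q n k * T (Suc k) s) + (\<Sum>k\<le>n. q ^ Suc k * gb q n (Suc k) * T (Suc k) s)"
      by (simp add: algebra_simps sum.distrib)
    also have "(\<Sum>k\<le>n. q ^ Suc k * gb q n (Suc k) * T (Suc k) s) = (\<Sum>k<n. q ^ Suc k * gb q n (Suc k) * T (Suc k) s)"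
      using z by (simp add: lessThan_Suc_atMost[symmetric])
    also have "T 0 s + (\<Sum>k\<le>n. gb q n k * T (Suc k) s) + \<dots> = (\<Sum>k\<le>n. gb q n k * T (Suc k) s) + (\<Sum>k\<le>n. gb q n k * q ^ k * T k s)"
    proof -
      have "(\<Sum>k\<le>n. gb q n k * q ^ k * T k s) = (\<Sum>k<Suc n. gb q n k * q ^ k * T k s)"
        by (simp add: lessThan_Suc_atMost)
      also have "\<dots> = T 0 s + (\<Sum>k<n. gb q n (Suc k) * q ^ Suc k * T (Suc k) s)"
        by (subst sum.lessThan_Suc_shift) simp
      finally show ?thesis by (simp add: algebra_simps)
    qed
    finally show "(\<Sum>k\<le>n. gb q n k * T (Suc k) s) + (\<Sum>k\<le>n. gb q n k * q ^ k * T k s) = (\<Sum>k\<le>Suc n. gb q (Suc n) k * T k s)"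
      by simp
  qed
  finally show ?case unfolding T_def .
qed

lemma gb_nn: "gb q n n = 1"
  by (induction n) (simp_all add: gb_zero)

lemma qbinom_N:
  assumes A: "ulin A" "pres I A" and B: "ulin B" "pres I B"
    and comm: "\<And>f. f \<in> CI I \<Longrightarrow> B (A f) = (\<lambda>s. q * A (B f) s)" and f: "f \<in> CI I"
    and gbv: "\<And>k. 0 < k \<Longrightarrow> k < N \<Longrightarrow> gb q N k = 0" and N: "0 < N"
  shows "((\<lambda>g s. A g s + B g s) ^^ N) f = (\<lambda>s. (A ^^ N) f s + (B ^^ N) f s)"
proof -
  have "((\<lambda>g s. A g s + B g s) ^^ N) f = (\<lambda>s. \<Sum>k\<le>N. gb q N k * (A ^^ k) ((B ^^ (N - k)) f) s)"
    by (rule qbinom[OF A B comm f])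
  also have "\<dots> = (\<lambda>s. \<Sum>k\<in>{0, N}. gb q N k * (A ^^ k) ((B ^^ (N - k)) f) s)"
    by (rule ext, rule sum.mono_neutral_right) (auto simp: gbv)
  also have "\<dots> = (\<lambda>s. (A ^^ N) f s + (B ^^ N) f s)"
    using N by (simp add: gb_zero gb_nn add.commute)
  finally show ?thesis .
qed


lemma bas_bs: "bas = bs"
  by (rule ext)+ (simp add: bas_def bs_def)

lemma carr_CI: "carr N = CI (box N)"
  by (simp add: carr_def CI_def)

lemma finite_box: "finite (box N)"
  by (simp add: box_def)

lemma box_iff[simp]: "(m, n) \<in> box N \<longleftrightarrow> m < N \<and> n < N"
  by (simp add: box_def)

lemma bas_carr: "m < N \<Longrightarrow> n < N \<Longrightarrow> bas (m, n) \<in> carr N"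
  by (auto simp: carr_def bas_def box_def)

lemma carr_add: "(f::nat\<times>nat\<Rightarrow>'a::comm_ring_1) \<in> carr N \<Longrightarrow> g \<in> carr N \<Longrightarrow> (\<lambda>s. f s + g s) \<in> carr N"
  by (auto simp: carr_def)
lemma carr_scal: "(f::nat\<times>nat\<Rightarrow>'a::comm_ring_1) \<in> carr N \<Longrightarrow> (\<lambda>s. c * f s) \<in> carr N"
  by (auto simp: carr_def)

lemma lin_ext_ulin: "ulin (lin_ext N T)"
  unfolding ulin_def lin_ext_def by (simp add: algebra_simps sum.distrib sum_distrib_left)

lemma lin_ext_bas: "p \<in> box N \<Longrightarrow> lin_ext N T (bas p) = T p"
proof
  fix s assume p: "p \<in> box N"
  have "(\<Sum>p'\<in>box N. bas p p' * T p' s) = (\<Sum>p'\<in>box N. if p' = p then T p s else 0)"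
    by (rule sum.cong) (auto simp: bas_def)
  also have "\<dots> = T p s" using p finite_box by (simp add: sum.delta)
  finally show "lin_ext N T (bas p) s = T p s" by (simp add: lin_ext_def)
qed

lemma lin_ext_carr: "(\<And>p. p \<in> box N \<Longrightarrow> T p \<in> carr N) \<Longrightarrow> lin_ext N T f \<in> carr N"
  unfolding lin_ext_def carr_def by (auto intro!: sum.neutral)

lemma lin_ext_pres: "(\<And>p. p \<in> box N \<Longrightarrow> T p \<in> carr N) \<Longrightarrow> pres (box N) (lin_ext N T)"
  unfolding pres_def carr_CI[symmetric] using lin_ext_carr by blast

lemma ueq:
  assumes "ulin A" "ulin B" "\<And>m n. m < N \<Longrightarrow> n < N \<Longrightarrow> A (bas (m, n)) = B (bas (m, n))"
    "f \<in> carr N"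
  shows "A f = B f"
  by (rule ulin_eq[OF finite_box assms(1,2)]) (use assms(3,4) in \<open>auto simp: bas_bs carr_CI\<close>)

definition qs :: "'a::comm_ring_1 \<Rightarrow> nat \<Rightarrow> 'a" where
  "qs q m = (\<Sum>k<m. q ^ k)"

lemma qs_0[simp]: "qs q 0 = 0" by (simp add: qs_def)
lemma qs_Suc: "qs q (Suc m) = 1 + q * qs q m"
  unfolding qs_def sum.lessThan_Suc_shift by (simp add: sum_distrib_left)

definition Gop :: "nat \<Rightarrow> 'a::comm_ring_1 \<Rightarrow> (nat \<times> nat \<Rightarrow> 'a) \<Rightarrow> (nat \<times> nat \<Rightarrow> 'a)" where
  "Gop N u = lin_ext N (gstep N u)"
definition Xop :: "nat \<Rightarrow> 'a::comm_ring_1 \<Rightarrow> 'a \<Rightarrow> 'a \<Rightarrow> 'a \<Rightarrow> (nat \<times> nat \<Rightarrow> 'a) \<Rightarrow> (nat \<times> nat \<Rightarrow> 'a)" where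
  "Xop N q u a b = lin_ext N (xstep N q u a b)"
definition Wv :: "nat \<Rightarrow> 'a::comm_ring_1 \<Rightarrow> nat \<Rightarrow> nat \<Rightarrow> (nat \<times> nat \<Rightarrow> 'a)" where
  "Wv N a m n = (if Suc n = N then (\<lambda>s. a * bas (m, 0) s) else bas (m, Suc n))"

lemma gstep_carr: "p \<in> box N \<Longrightarrow> gstep N u p \<in> carr N"
  by (cases p) (auto simp: gstep_def intro: bas_carr carr_scal)

lemma Wv_carr: "m < N \<Longrightarrow> n < N \<Longrightarrow> Wv N a m n \<in> carr N"
  by (auto simp: Wv_def intro!: bas_carr carr_scal)

lemma xstep_carr: "p \<in> box N \<Longrightarrow> xstep N q u a b p \<in> carr N"
proof (cases p)
  case (Pair m n)
  assume "p \<in> box N"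
  then have mn: "m < N" "n < N" using Pair by auto
  have "xstep N q u a b p = (\<lambda>s. q ^ m * Wv N a m n s + (b * (\<Sum>k<m. q ^ k)) * gstep N u (m, n) s)"
    unfolding Pair xstep_def Wv_def by (rule ext) auto
  then show ?thesis using mn gstep_carr[of "(m,n)" N u]
    by (auto intro!: carr_add carr_scal Wv_carr)
qed

lemma Gop_ulin: "ulin (Gop N u)" by (simp add: Gop_def lin_ext_ulin)
lemma Xop_ulin: "ulin (Xop N q u a b)" by (simp add: Xop_def lin_ext_ulin)
lemma Gop_carr: "Gop N u f \<in> carr N" unfolding Gop_def by (rule lin_ext_carr) (rule gstep_carr)
lemma Xop_carr: "Xop N q u a b f \<in> carr N" unfolding Xop_def by (rule lin_ext_carr) (rule xstep_carr)
lemma Gop_pres: "pres (box N) (Gop N u)" unfolding Gop_def by (rule lin_ext_pres) (rule gstep_carr)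
lemma Xop_pres: "pres (box N) (Xop N q u a b)" unfolding Xop_def by (rule lin_ext_pres) (rule xstep_carr)

lemma Gop_bas: "m < N \<Longrightarrow> n < N \<Longrightarrow>
  Gop N u (bas (m, n)) = (if Suc m = N then (\<lambda>s. u * bas (0, n) s) else bas (Suc m, n))"
  unfolding Gop_def by (simp add: lin_ext_bas gstep_def)

lemma Xop_bas: "m < N \<Longrightarrow> n < N \<Longrightarrow>
  Xop N q u a b (bas (m, n)) = (\<lambda>s. q ^ m * Wv N a m n s + b * qs q m * Gop N u (bas (m, n)) s)"
  unfolding Xop_def by (rule ext) (simp add: lin_ext_bas xstep_def Wv_def qs_def Gop_bas gstep_def)

lemma pow_carr: "pres (box N) A \<Longrightarrow> f \<in> carr N \<Longrightarrow> (A ^^ k) f \<in> carr N"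
  unfolding carr_CI by (rule presD[OF pres_pow])

lemma Gop_pow_lt: "m + j < N \<Longrightarrow> n < N \<Longrightarrow> (Gop N u ^^ j) (bas (m, n)) = bas (m + j, n)"
  by (induction j) (auto simp: Gop_bas)

lemma R1_bas:
  assumes mn: "m < N" "n < N"
  shows "(Gop N u ^^ N) (bas (m, n)) = (\<lambda>s. u * bas (m, n) s)"
proof -
  obtain r where "N = Suc (m + r)" using less_imp_Suc_add[OF mn(1)] by blast
  then have r: "N = m + Suc r" by simp
  have "(Gop N u ^^ N) (bas (m, n)) = (Gop N u ^^ m) (Gop N u ((Gop N u ^^ r) (bas (m, n))))"
    unfolding r funpow_add by simp
  also have "(Gop N u ^^ r) (bas (m, n)) = bas (m + r, n)"
    using r mn by (intro Gop_pow_lt) auto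
  also have "Gop N u (bas (m + r, n)) = (\<lambda>s. u * bas (0, n) s)"
    using r mn by (subst Gop_bas) auto
  also have "(Gop N u ^^ m) (\<lambda>s. u * bas (0, n) s) = (\<lambda>s. u * (Gop N u ^^ m) (bas (0, n)) s)"
    by (rule ulin_scal[OF ulin_pow[OF Gop_ulin]])
  also have "(Gop N u ^^ m) (bas (0, n)) = bas (m, n)"
    using Gop_pow_lt[of 0 m N n u] mn by simp
  finally show ?thesis .
qed

lemma R1: "f \<in> carr N \<Longrightarrow> (Gop N u ^^ N) f = (\<lambda>s. u * f s)"
  by (rule ueq[where N=N, OF ulin_pow[OF Gop_ulin] ulin_smul[OF ulin_id]]) (simp_all add: R1_bas)


definition Yop :: "nat \<Rightarrow> 'a::comm_ring_1 \<Rightarrow> 'a \<Rightarrow> 'a \<Rightarrow> 'a \<Rightarrow> 'a \<Rightarrow> (nat \<times> nat \<Rightarrow> 'a) \<Rightarrow> (nat \<times> nat \<Rightarrow> 'a)" where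
  "Yop N q u a b d = (\<lambda>f s. d * Gop N u f s + Xop N q u a b f s)"

definition Phi :: "nat \<Rightarrow> 'a::comm_ring_1 \<Rightarrow> 'a \<Rightarrow> 'a \<Rightarrow> 'a \<Rightarrow> 'a \<Rightarrow> (nat \<times> nat \<Rightarrow> 'a) \<Rightarrow> (nat \<times> nat \<Rightarrow> 'a)" where
  "Phi N q u a b d = lin_ext N (\<lambda>p. (Gop N u ^^ fst p) ((Yop N q u a b d ^^ snd p) (bas (0, 0))))"

lemma lin2: "ulin A \<Longrightarrow> A (\<lambda>s. c * f s + d * g s) = (\<lambda>s. c * A f s + d * A g s)"
proof -
  assume u: "ulin A"
  have "A (\<lambda>s. c * f s + d * g s) = (\<lambda>s. A (\<lambda>s. c * f s) s + A (\<lambda>s. d * g s) s)"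
    by (rule ulin_add[OF u])
  also have "\<dots> = (\<lambda>s. c * A f s + d * A g s)"
    unfolding ulin_scal[OF u] ..
  finally show ?thesis .
qed

lemma Yop_ulin: "ulin (Yop N q u a b d)"
  unfolding Yop_def by (rule ulin_plus[OF ulin_smul[OF Gop_ulin] Xop_ulin])
lemma Yop_carr: "Yop N q u a b d f \<in> carr N"
  unfolding Yop_def by (intro carr_add carr_scal Gop_carr Xop_carr)
lemma Yop_pres: "pres (box N) (Yop N q u a b d)"
  unfolding pres_def carr_CI[symmetric] using Yop_carr by blast
lemma Phi_ulin: "ulin (Phi N q u a b d)"
  unfolding Phi_def by (rule lin_ext_ulin)
lemma Phi_bas': "p \<in> box N \<Longrightarrow> Phi N q u a b d (bas p) = (Gop N u ^^ fst p) ((Yop N q u a b d ^^ snd p) (bas (0, 0)))"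
  unfolding Phi_def by (rule lin_ext_bas)
lemma Phi_bas: "m < N \<Longrightarrow> n < N \<Longrightarrow> Phi N q u a b d (bas (m, n)) = (Gop N u ^^ m) ((Yop N q u a b d ^^ n) (bas (0, 0)))"
  by (simp add: Phi_bas')

lemma iter_comm:
  assumes "\<And>f. f \<in> carr N \<Longrightarrow> P (A f) = B (P f)" "pres (box N) A" "f \<in> carr N"
  shows "P ((A ^^ k) f) = (B ^^ k) (P f)"
proof (induction k)
  case 0 then show ?case by simp
next
  case (Suc k)
  have "P ((A ^^ Suc k) f) = P (A ((A ^^ k) f))" by simp
  also have "\<dots> = B (P ((A ^^ k) f))" using assms(1)[OF pow_carr[OF assms(2,3)]] .
  finally show ?case using Suc by simp
qed

lemma Bm_ulin: "ulin (\<lambda>g. Bmult N q u a b g k)"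
  unfolding ulin_def Bmult_def by (simp add: algebra_simps sum.distrib sum_distrib_left)

lemma Bm_bas': "p \<in> box N \<Longrightarrow> Bmult N q u a b (bas p) k = (Gop N u ^^ fst p) ((Xop N q u a b ^^ snd p) k)"
proof
  fix s assume p: "p \<in> box N"
  have "(\<Sum>p'\<in>box N. bas p p' * (lin_ext N (gstep N u) ^^ fst p') ((lin_ext N (xstep N q u a b) ^^ snd p') k) s)
     = (\<Sum>p'\<in>box N. if p' = p then (lin_ext N (gstep N u) ^^ fst p) ((lin_ext N (xstep N q u a b) ^^ snd p) k) s else 0)"
    by (rule sum.cong) (auto simp: bas_def)
  also have "\<dots> = (lin_ext N (gstep N u) ^^ fst p) ((lin_ext N (xstep N q u a b) ^^ snd p) k) s"
    using p finite_box by (simp add: sum.delta)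
  finally show "Bmult N q u a b (bas p) k s = (Gop N u ^^ fst p) ((Xop N q u a b ^^ snd p) k) s"
    by (simp add: Bmult_def Gop_def Xop_def)
qed

lemma Bm_bas: "m < N \<Longrightarrow> n < N \<Longrightarrow> Bmult N q u a b (bas (m, n)) k = (Gop N u ^^ m) ((Xop N q u a b ^^ n) k)"
  by (simp add: Bm_bas')

locale tq =
  fixes N :: nat and q :: "'a::comm_ring_1"
  assumes N2: "2 \<le> N" and qN: "q ^ N = 1" and qsN: "qs q N = 0"
    and gbv: "\<And>k. 0 < k \<Longrightarrow> k < N \<Longrightarrow> gb q N k = 0"
begin

abbreviation G where "G u \<equiv> Gop N u"
abbreviation X where "X u a b \<equiv> Xop N q u a b"

lemma G_lin: "Gop N u (\<lambda>s. c * f s + d * g s) = (\<lambda>s. c * Gop N u f s + d * Gop N u g s)"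
  by (simp add: ulin_add[OF Gop_ulin] ulin_scal[OF Gop_ulin])

lemma G_Wv_lt: "Suc m < N \<Longrightarrow> n < N \<Longrightarrow> Gop N u (Wv N a m n) = Wv N a (Suc m) n"
  unfolding Wv_def by (auto simp: ulin_scal[OF Gop_ulin] Gop_bas)

lemma G_Wv_eq: "Suc m = N \<Longrightarrow> n < N \<Longrightarrow> Gop N u (Wv N a m n) = (\<lambda>s. u * Wv N a 0 n s)"
  unfolding Wv_def by (auto simp: ulin_scal[OF Gop_ulin] Gop_bas)

lemma R3_bas:
  assumes mn: "m < N" "n < N"
  shows "Xop N q u a b (Gop N u (bas (m, n))) =
     (\<lambda>s. q * Gop N u (Xop N q u a b (bas (m, n))) s + b * Gop N u (Gop N u (bas (m, n))) s)"
proof (cases "Suc m = N")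
  case False
  then have m1: "Suc m < N" using mn by simp
  have g1: "Gop N u (bas (m, n)) = bas (Suc m, n)" using mn False by (simp add: Gop_bas)
  have L: "Xop N q u a b (bas (Suc m, n)) = (\<lambda>s. q ^ Suc m * Wv N a (Suc m) n s + b * qs q (Suc m) * Gop N u (bas (Suc m, n)) s)"
    using m1 mn by (simp add: Xop_bas)
  have x1: "Xop N q u a b (bas (m, n)) = (\<lambda>s. q ^ m * Wv N a m n s + (b * qs q m) * bas (Suc m, n) s)"
    using mn g1 by (simp add: Xop_bas)
  have x2: "Gop N u (Xop N q u a b (bas (m, n))) = (\<lambda>s. q ^ m * Wv N a (Suc m) n s + (b * qs q m) * Gop N u (bas (Suc m, n)) s)"
    unfolding x1 G_lin G_Wv_lt[OF m1 mn(2)] ..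
  show ?thesis unfolding g1 L x2 by (rule ext) (simp add: qs_Suc algebra_simps)
next
  case True
  have g1: "Gop N u (bas (m, n)) = (\<lambda>s. u * bas (0, n) s)" using mn True by (simp add: Gop_bas)
  have L: "Xop N q u a b (\<lambda>s. u * bas (0, n) s) = (\<lambda>s. u * Wv N a 0 n s)"
    using mn by (simp add: ulin_scal[OF Xop_ulin] Xop_bas)
  have x1: "Xop N q u a b (bas (m, n)) = (\<lambda>s. q ^ m * Wv N a m n s + (b * qs q m * u) * bas (0, n) s)"
    using mn g1 by (simp add: Xop_bas algebra_simps)
  have x2: "Gop N u (Xop N q u a b (bas (m, n))) = (\<lambda>s. q ^ m * (u * Wv N a 0 n s) + (b * qs q m * u) * Gop N u (bas (0, n)) s)"
    unfolding x1 G_lin G_Wv_eq[OF True mn(2)] by (simp add: mult.assoc)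
  have x3: "Gop N u (\<lambda>s. u * bas (0, n) s) = (\<lambda>s. u * Gop N u (bas (0, n)) s)"
    by (rule ulin_scal[OF Gop_ulin])
  have q1: "q * q ^ m = 1" using qN True by (metis power_Suc)
  have q2: "1 + q * qs q m = 0" using qsN True qs_Suc by metis
  show ?thesis unfolding x2 g1 x3 L
  proof (rule ext)
    fix s
    have "q * (q ^ m * (u * Wv N a 0 n s) + b * qs q m * u * Gop N u (bas (0, n)) s) + b * (u * Gop N u (bas (0, n)) s)
        = (q * q ^ m) * (u * Wv N a 0 n s) + (1 + q * qs q m) * (b * u * Gop N u (bas (0, n)) s)"
      by (simp add: algebra_simps)
    also have "\<dots> = u * Wv N a 0 n s" unfolding q1 q2 by simp
    finally show "u * Wv N a 0 n s = q * (q ^ m * (u * Wv N a 0 n s) + b * qs q m * u * Gop N u (bas (0, n)) s) + b * (u * Gop N u (bas (0, n)) s)"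
      by simp
  qed
qed

lemma R3: "f \<in> carr N \<Longrightarrow> Xop N q u a b (Gop N u f) =
     (\<lambda>s. q * Gop N u (Xop N q u a b f) s + b * Gop N u (Gop N u f) s)"
  by (rule ueq[where N=N, OF ulin_comp[OF Xop_ulin Gop_ulin]
        ulin_plus[OF ulin_smul[OF ulin_comp[OF Gop_ulin Xop_ulin]] ulin_smul[OF ulin_comp[OF Gop_ulin Gop_ulin]]]])
     (simp_all add: R3_bas)

lemma X0_bas: "m < N \<Longrightarrow> n < N \<Longrightarrow> Xop N q u a 0 (bas (m, n)) = (\<lambda>s. q ^ m * Wv N a m n s)"
  by (simp add: Xop_bas)

lemma X0_pow_lt: "n + j < N \<Longrightarrow> m < N \<Longrightarrow> (Xop N q u a 0 ^^ j) (bas (m, n)) = (\<lambda>s. q ^ (m * j) * bas (m, n + j) s)"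
proof (induction j)
  case 0 then show ?case by simp
next
  case (Suc j)
  have "(Xop N q u a 0 ^^ Suc j) (bas (m, n)) = Xop N q u a 0 (\<lambda>s. q ^ (m * j) * bas (m, n + j) s)"
    using Suc by simp
  also have "\<dots> = (\<lambda>s. q ^ (m * j) * (q ^ m * bas (m, n + Suc j) s))"
    using Suc.prems by (simp add: ulin_scal[OF Xop_ulin] X0_bas Wv_def)
  also have "\<dots> = (\<lambda>s. q ^ (m * Suc j) * bas (m, n + Suc j) s)"
    by (simp add: power_add mult.assoc mult.commute mult.left_commute)
  finally show ?case .
qed

lemma R2_bas:
  assumes mn: "m < N" "n < N"
  shows "(Xop N q u a 0 ^^ N) (bas (m, n)) = (\<lambda>s. a * bas (m, n) s)"
proof -
  obtain r where "N = Suc (n + r)" using less_imp_Suc_add[OF mn(2)] by blast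
  then have r: "N = n + Suc r" "Suc (n + r) = N" by simp_all
  let ?X = "Xop N q u a 0"
  have "(?X ^^ N) (bas (m, n)) = (?X ^^ n) (?X ((?X ^^ r) (bas (m, n))))"
    unfolding r(1) funpow_add by simp
  also have "(?X ^^ r) (bas (m, n)) = (\<lambda>s. q ^ (m * r) * bas (m, n + r) s)"
    using r mn by (intro X0_pow_lt) auto
  also have "?X (\<lambda>s. q ^ (m * r) * bas (m, n + r) s) = (\<lambda>s. (q ^ (m * r) * q ^ m * a) * bas (m, 0) s)"
    using r mn by (simp add: ulin_scal[OF Xop_ulin] X0_bas Wv_def mult.assoc)
  also have "(?X ^^ n) (\<lambda>s. (q ^ (m * r) * q ^ m * a) * bas (m, 0) s) = (\<lambda>s. (q ^ (m * r) * q ^ m * a) * (?X ^^ n) (bas (m, 0)) s)"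
    by (rule ulin_scal[OF ulin_pow[OF Xop_ulin]])
  also have "(?X ^^ n) (bas (m, 0)) = (\<lambda>s. q ^ (m * n) * bas (m, n) s)"
    using X0_pow_lt[of 0 n m u a] mn by simp
  finally have e: "(?X ^^ N) (bas (m, n)) = (\<lambda>s. (q ^ (m * r) * q ^ m * a) * (q ^ (m * n) * bas (m, n) s))" .
  have "q ^ (m * r) * q ^ m * a * q ^ (m * n) = a * (q ^ N) ^ m"
    unfolding r(1) by (simp add: power_add power_mult[symmetric] algebra_simps)
  then have "q ^ (m * r) * q ^ m * a * q ^ (m * n) = a" using qN by simp
  then show ?thesis unfolding e by (simp add: mult.assoc[symmetric])
qed

lemma R2: "f \<in> carr N \<Longrightarrow> (Xop N q u a 0 ^^ N) f = (\<lambda>s. a * f s)"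
  by (rule ueq[where N=N, OF ulin_pow[OF Xop_ulin] ulin_smul[OF ulin_id]]) (simp_all add: R2_bas)


lemma N0: "0 < N" using N2 by simp

lemma e_carr: "bas (0, 0) \<in> carr N" using N0 by (intro bas_carr) auto

lemma Phi_carr: "Phi N q u a b d f \<in> carr N"
  unfolding Phi_def by (rule lin_ext_carr) (auto intro!: pow_carr[OF Gop_pres] pow_carr[OF Yop_pres] e_carr)

lemma Y_rel: "f \<in> carr N \<Longrightarrow> Yop N q u a b d (Gop N u f) =
   (\<lambda>s. q * Gop N u (Yop N q u a b d f) s + (b + d * (1 - q)) * Gop N u (Gop N u f) s)"
  unfolding Yop_def using R3[of f u a b]
  by (simp add: ulin_add[OF Gop_ulin] ulin_scal[OF Gop_ulin] algebra_simps)

lemma Y_Gpow: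
  assumes H: "\<And>f. f \<in> carr N \<Longrightarrow> Y (Gop N u f) = (\<lambda>s. q * Gop N u (Y f) s + c * Gop N u (Gop N u f) s)"
    and f: "f \<in> carr N"
  shows "Y ((Gop N u ^^ m) f) = (\<lambda>s. q ^ m * (Gop N u ^^ m) (Y f) s + c * qs q m * (Gop N u ^^ Suc m) f s)"
proof (induction m)
  case 0 then show ?case by simp
next
  case (Suc m)
  have "Y ((Gop N u ^^ Suc m) f) = Y (Gop N u ((Gop N u ^^ m) f))" by simp
  also have "\<dots> = (\<lambda>s. q * Gop N u (Y ((Gop N u ^^ m) f)) s + c * Gop N u (Gop N u ((Gop N u ^^ m) f)) s)"
    by (rule H[OF pow_carr[OF Gop_pres f]])
  also have "Gop N u (Y ((Gop N u ^^ m) f)) = (\<lambda>s. q ^ m * (Gop N u ^^ Suc m) (Y f) s + c * qs q m * (Gop N u ^^ Suc (Suc m)) f s)"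
    unfolding Suc lin2[OF Gop_ulin] by simp
  also have "Gop N u (Gop N u ((Gop N u ^^ m) f)) = (Gop N u ^^ Suc (Suc m)) f" by simp
  finally have e: "Y ((Gop N u ^^ Suc m) f) = (\<lambda>s. q * (q ^ m * (Gop N u ^^ Suc m) (Y f) s + c * qs q m * (Gop N u ^^ Suc (Suc m)) f s) + c * (Gop N u ^^ Suc (Suc m)) f s)" .
  show ?case unfolding e by (rule ext) (simp add: qs_Suc algebra_simps)
qed

lemma Phi_G: "f \<in> carr N \<Longrightarrow> Phi N q u a2 b2 d (Gop N u f) = Gop N u (Phi N q u a2 b2 d f)"
proof (rule ueq[where N=N, OF ulin_comp[OF Phi_ulin Gop_ulin] ulin_comp[OF Gop_ulin Phi_ulin]])
  fix m n assume mn: "m < N" "n < N"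
  let ?Y = "Yop N q u a2 b2 d"
  show "Phi N q u a2 b2 d (Gop N u (bas (m, n))) = Gop N u (Phi N q u a2 b2 d (bas (m, n)))"
  proof (cases "Suc m = N")
    case False
    then show ?thesis using mn by (simp add: Gop_bas Phi_bas)
  next
    case True
    have "Phi N q u a2 b2 d (Gop N u (bas (m, n))) = (\<lambda>s. u * (?Y ^^ n) (bas (0, 0)) s)"
      using mn True N0 by (simp add: Gop_bas ulin_scal[OF Phi_ulin] Phi_bas)
    also have "\<dots> = (Gop N u ^^ N) ((?Y ^^ n) (bas (0, 0)))"
      by (rule R1[symmetric]) (rule pow_carr[OF Yop_pres e_carr])
    also have "\<dots> = Gop N u (Phi N q u a2 b2 d (bas (m, n)))"
      using mn True by (simp add: Phi_bas del: funpow.simps) (metis funpow.simps(2) o_apply)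
    finally show ?thesis .
  qed
qed

lemma Phi_X:
  assumes b1: "b1 = b2 + d * (1 - q)"
    and H2: "(Yop N q u a2 b2 d ^^ N) (bas (0, 0)) = (\<lambda>s. a1 * bas (0, 0) s)"
    and f: "f \<in> carr N"
  shows "Phi N q u a2 b2 d (Xop N q u a1 b1 f) = Yop N q u a2 b2 d (Phi N q u a2 b2 d f)"
proof (rule ueq[where N=N, OF ulin_comp[OF Phi_ulin Xop_ulin] ulin_comp[OF Yop_ulin Phi_ulin] _ f])
  fix m n assume mn: "m < N" "n < N"
  let ?Y = "Yop N q u a2 b2 d" and ?P = "Phi N q u a2 b2 d" and ?G = "Gop N u"
  have Yr: "\<And>f. f \<in> carr N \<Longrightarrow> ?Y (?G f) = (\<lambda>s. q * ?G (?Y f) s + b1 * ?G (?G f) s)"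
    unfolding b1 by (rule Y_rel)
  have c: "(?Y ^^ n) (bas (0, 0)) \<in> carr N" by (rule pow_carr[OF Yop_pres e_carr])
  have R: "?Y (?P (bas (m, n))) = (\<lambda>s. q ^ m * (?G ^^ m) ((?Y ^^ Suc n) (bas (0, 0))) s + b1 * qs q m * ?G (?P (bas (m, n))) s)"
    using Y_Gpow[OF Yr c, of m] mn by (simp add: Phi_bas)
  have L: "?P (Xop N q u a1 b1 (bas (m, n))) = (\<lambda>s. q ^ m * ?P (Wv N a1 m n) s + b1 * qs q m * ?G (?P (bas (m, n))) s)"
    using mn by (simp add: Xop_bas lin2[OF Phi_ulin] Phi_G bas_carr)
  have W: "?P (Wv N a1 m n) = (?G ^^ m) ((?Y ^^ Suc n) (bas (0, 0)))"
  proof (cases "Suc n = N")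
    case True
    have "?P (Wv N a1 m n) = (\<lambda>s. a1 * (?G ^^ m) (bas (0, 0)) s)"
      using mn True by (simp add: Wv_def ulin_scal[OF Phi_ulin] Phi_bas)
    also have "\<dots> = (?G ^^ m) (\<lambda>s. a1 * bas (0, 0) s)"
      by (rule ulin_scal[OF ulin_pow[OF Gop_ulin], symmetric])
    also have "\<dots> = (?G ^^ m) ((?Y ^^ Suc n) (bas (0, 0)))" using H2 True by simp
    finally show ?thesis .
  next
    case False
    then show ?thesis using mn by (simp add: Wv_def Phi_bas del: funpow.simps)
  qed
  show "?P (Xop N q u a1 b1 (bas (m, n))) = ?Y (?P (bas (m, n)))"
    unfolding L R W ..
qed


lemma X_pow_e: "n < N \<Longrightarrow> (Xop N q u a b ^^ n) (bas (0, 0)) = bas (0, n)"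
proof (induction n)
  case 0 then show ?case by simp
next
  case (Suc n)
  then have "(Xop N q u a b ^^ Suc n) (bas (0, 0)) = Xop N q u a b (bas (0, n))" by simp
  also have "\<dots> = bas (0, Suc n)" using Suc.prems N0 by (simp add: Xop_bas Wv_def)
  finally show ?case .
qed

lemma X_N_e: "(Xop N q u a b ^^ N) (bas (0, 0)) = (\<lambda>s. a * bas (0, 0) s)"
proof -
  obtain r where r: "N = Suc r" using N0 by (cases N) auto
  have "(Xop N q u a b ^^ N) (bas (0, 0)) = Xop N q u a b (bas (0, r))"
    using r X_pow_e[of r u a b] by simp
  also have "\<dots> = (\<lambda>s. a * bas (0, 0) s)" using r N0 by (simp add: Xop_bas Wv_def)
  finally show ?thesis .
qed

lemma A_pow: "((\<lambda>g s. d * Gop N u g s) ^^ k) f = (\<lambda>s. d ^ k * (Gop N u ^^ k) f s)"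
proof (induction k)
  case 0 then show ?case by simp
next
  case (Suc k)
  then show ?case by (simp add: ulin_scal[OF Gop_ulin] mult.assoc)
qed

lemma A_ulin: "ulin (\<lambda>g s. d * Gop N u g s)" by (rule ulin_smul[OF Gop_ulin])
lemma A_pres: "pres (box N) (\<lambda>g s. d * Gop N u g s)" by (rule pres_smul[OF Gop_pres])

lemma H2_phi:
  "(Yop N q u (a - d ^ N * u) 0 d ^^ N) (bas (0, 0)) = (\<lambda>s. a * bas (0, 0) s)"
proof -
  let ?A = "\<lambda>g s. d * Gop N u g s" and ?B = "Xop N q u (a - d ^ N * u) 0"
  have comm: "\<And>f. f \<in> CI (box N) \<Longrightarrow> ?B (?A f) = (\<lambda>s. q * ?A (?B f) s)"
  proof -
    fix f :: "nat \<times> nat \<Rightarrow> 'a" assume "f \<in> CI (box N)"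
    then have f: "f \<in> carr N" by (simp add: carr_CI)
    show "?B (?A f) = (\<lambda>s. q * ?A (?B f) s)"
      using R3[OF f, of u "a - d ^ N * u" 0] by (simp add: ulin_scal[OF Xop_ulin] algebra_simps)
  qed
  have "(Yop N q u (a - d ^ N * u) 0 d ^^ N) (bas (0, 0)) = ((\<lambda>g s. ?A g s + ?B g s) ^^ N) (bas (0, 0))"
    by (simp add: Yop_def)
  also have "\<dots> = (\<lambda>s. (?A ^^ N) (bas (0, 0)) s + (?B ^^ N) (bas (0, 0)) s)"
    by (rule qbinom_N[OF A_ulin A_pres Xop_ulin Xop_pres comm _ gbv N0]) (use e_carr carr_CI in auto)
  also have "\<dots> = (\<lambda>s. a * bas (0, 0) s)"
    unfolding A_pow R1[OF e_carr] R2[OF e_carr] by (simp add: algebra_simps)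
  finally show ?thesis .
qed

lemma H2_psi:
  assumes bd: "b - d * (1 - q) = 0"
  shows "(Yop N q u a b (- d) ^^ N) (bas (0, 0)) = (\<lambda>s. (a - d ^ N * u) * bas (0, 0) s)"
proof -
  let ?A = "\<lambda>g s. d * Gop N u g s" and ?B = "Yop N q u a b (- d)"
  have comm: "\<And>f. f \<in> CI (box N) \<Longrightarrow> ?B (?A f) = (\<lambda>s. q * ?A (?B f) s)"
  proof -
    fix f :: "nat \<times> nat \<Rightarrow> 'a" assume "f \<in> CI (box N)"
    then have f: "f \<in> carr N" by (simp add: carr_CI)
    have "?B (?A f) = (\<lambda>s. d * ?B (Gop N u f) s)" by (rule ulin_scal[OF Yop_ulin])
    also have "\<dots> = (\<lambda>s. d * (q * Gop N u (?B f) s + (b + - d * (1 - q)) * Gop N u (Gop N u f) s))"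
      unfolding Y_rel[OF f] ..
    also have "\<dots> = (\<lambda>s. q * ?A (?B f) s)" using bd by (simp add: algebra_simps)
    finally show "?B (?A f) = (\<lambda>s. q * ?A (?B f) s)" .
  qed
  have sumX: "(\<lambda>g s. ?A g s + ?B g s) = Xop N q u a b"
    by (rule ext)+ (simp add: Yop_def algebra_simps)
  have "(\<lambda>s. a * bas (0, 0) s) = (Xop N q u a b ^^ N) (bas (0, 0))" by (rule X_N_e[symmetric])
  also have "\<dots> = ((\<lambda>g s. ?A g s + ?B g s) ^^ N) (bas (0, 0))" unfolding sumX ..
  also have "\<dots> = (\<lambda>s. (?A ^^ N) (bas (0, 0)) s + (?B ^^ N) (bas (0, 0)) s)"
    by (rule qbinom_N[OF A_ulin A_pres Yop_ulin Yop_pres comm _ gbv N0]) (use e_carr carr_CI in auto)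
  also have "\<dots> = (\<lambda>s. d ^ N * u * bas (0, 0) s + (?B ^^ N) (bas (0, 0)) s)"
    unfolding A_pow R1[OF e_carr] by (simp add: mult.assoc)
  finally have "(\<lambda>s. a * bas (0, 0) s) = (\<lambda>s. d ^ N * u * bas (0, 0) s + (?B ^^ N) (bas (0, 0)) s)" .
  then have "\<And>s. a * bas (0, 0) s = d ^ N * u * bas (0, 0) s + (?B ^^ N) (bas (0, 0)) s"
    by metis
  then show ?thesis by (auto simp: algebra_simps intro!: ext)
qed

lemma roundtrip:
  assumes d: "d1 + d2 = 0"
    and IG: "\<And>f. f \<in> carr N \<Longrightarrow> Phi N q u aS bS d2 (Gop N u f) = Gop N u (Phi N q u aS bS d2 f)"
    and IX: "\<And>f. f \<in> carr N \<Longrightarrow> Phi N q u aS bS d2 (Xop N q u aT bT f) = Yop N q u aS bS d2 (Phi N q u aS bS d2 f)"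
    and f: "f \<in> carr N"
  shows "Phi N q u aS bS d2 (Phi N q u aT bT d1 f) = f"
proof (rule ueq[where N=N, OF ulin_comp[OF Phi_ulin Phi_ulin] ulin_id _ f])
  fix m n assume mn: "m < N" "n < N"
  let ?P = "Phi N q u aS bS d2"
  have IY: "\<And>f. f \<in> carr N \<Longrightarrow> ?P (Yop N q u aT bT d1 f) = Xop N q u aS bS (?P f)"
  proof -
    fix f :: "nat \<times> nat \<Rightarrow> 'a" assume f: "f \<in> carr N"
    have "?P (Yop N q u aT bT d1 f) = (\<lambda>s. d1 * ?P (Gop N u f) s + ?P (Xop N q u aT bT f) s)"
      unfolding Yop_def ulin_add[OF Phi_ulin] ulin_scal[OF Phi_ulin] ..
    also have "\<dots> = Xop N q u aS bS (?P f)"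
    proof -
      have d2e: "d2 = - d1" using d by (metis add.commute add_eq_0_iff)
      show ?thesis unfolding IG[OF f] IX[OF f] Yop_def by (rule ext) (simp add: d2e)
    qed
    finally show "?P (Yop N q u aT bT d1 f) = Xop N q u aS bS (?P f)" .
  qed
  have pe: "?P (bas (0, 0)) = bas (0, 0)" using N0 by (simp add: Phi_bas)
  have "?P (Phi N q u aT bT d1 (bas (m, n))) = ?P ((Gop N u ^^ m) ((Yop N q u aT bT d1 ^^ n) (bas (0, 0))))"
    using mn by (simp add: Phi_bas)
  also have "\<dots> = (Gop N u ^^ m) (?P ((Yop N q u aT bT d1 ^^ n) (bas (0, 0))))"
    by (rule iter_comm[where P="?P" and A="Gop N u" and B="Gop N u", OF IG Gop_pres pow_carr[OF Yop_pres e_carr]])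
  also have "?P ((Yop N q u aT bT d1 ^^ n) (bas (0, 0))) = (Xop N q u aS bS ^^ n) (bas (0, 0))"
    using iter_comm[where P="?P" and A="Yop N q u aT bT d1" and B="Xop N q u aS bS", OF IY Yop_pres e_carr, of n] pe by simp
  also have "\<dots> = bas (0, n)" using mn(2) by (rule X_pow_e)
  also have "(Gop N u ^^ m) (bas (0, n)) = bas (m, n)" using Gop_pow_lt[of 0 m N n u] mn by simp
  finally show "?P (Phi N q u aT bT d1 (bas (m, n))) = bas (m, n)" .
qed

lemma Bm_G:
  assumes g: "g \<in> carr N" and k: "k \<in> carr N"
  shows "Bmult N q u a 0 (Gop N u g) k = Gop N u (Bmult N q u a 0 g k)"
proof (rule ueq[where N=N, OF ulin_comp[OF Bm_ulin Gop_ulin] ulin_comp[OF Gop_ulin Bm_ulin] _ g])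
  fix m n assume mn: "m < N" "n < N"
  show "Bmult N q u a 0 (Gop N u (bas (m, n))) k = Gop N u (Bmult N q u a 0 (bas (m, n)) k)"
  proof (cases "Suc m = N")
    case False
    then show ?thesis using mn by (simp add: Gop_bas Bm_bas)
  next
    case True
    have "Bmult N q u a 0 (Gop N u (bas (m, n))) k = (\<lambda>s. u * (Xop N q u a 0 ^^ n) k s)"
      using mn True N0 by (simp add: Gop_bas ulin_scal[OF Bm_ulin] Bm_bas)
    also have "\<dots> = (Gop N u ^^ N) ((Xop N q u a 0 ^^ n) k)"
      by (rule R1[symmetric]) (rule pow_carr[OF Xop_pres k])
    also have "\<dots> = Gop N u (Bmult N q u a 0 (bas (m, n)) k)"
      using mn True by (simp add: Bm_bas del: funpow.simps) (metis funpow.simps(2) o_apply)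
    finally show ?thesis .
  qed
qed

lemma Bm_X:
  assumes g: "g \<in> carr N" and k: "k \<in> carr N"
  shows "Bmult N q u a 0 (Xop N q u a 0 g) k = Xop N q u a 0 (Bmult N q u a 0 g k)"
proof (rule ueq[where N=N, OF ulin_comp[OF Bm_ulin Xop_ulin] ulin_comp[OF Xop_ulin Bm_ulin] _ g])
  fix m n assume mn: "m < N" "n < N"
  let ?X = "Xop N q u a 0" and ?G = "Gop N u"
  have Xr: "\<And>f. f \<in> carr N \<Longrightarrow> ?X (?G f) = (\<lambda>s. q * ?G (?X f) s + 0 * ?G (?G f) s)"
    by (rule R3)
  have R: "?X (Bmult N q u a 0 (bas (m, n)) k) = (\<lambda>s. q ^ m * (?G ^^ m) ((?X ^^ Suc n) k) s)"
    using Y_Gpow[OF Xr pow_carr[OF Xop_pres k], of m] mn by (simp add: Bm_bas)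
  show "Bmult N q u a 0 (?X (bas (m, n))) k = ?X (Bmult N q u a 0 (bas (m, n)) k)"
  proof (cases "Suc n = N")
    case True
    have "Bmult N q u a 0 (?X (bas (m, n))) k = (\<lambda>s. q ^ m * (a * (?G ^^ m) k s))"
      using mn True N0 by (simp add: X0_bas Wv_def ulin_scal[OF Bm_ulin] Bm_bas)
    also have "\<dots> = (\<lambda>s. q ^ m * (?G ^^ m) ((?X ^^ Suc n) k) s)"
      using True R2[OF k] by (simp add: ulin_scal[OF ulin_pow[OF Gop_ulin]])
    finally show ?thesis unfolding R .
  next
    case False
    then show ?thesis unfolding R using mn by (simp add: X0_bas Wv_def ulin_scal[OF Bm_ulin] Bm_bas del: funpow.simps)
  qed
qed


lemma Bm_Y:
  assumes g: "g \<in> carr N" and k: "k \<in> carr N"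
  shows "Bmult N q u a 0 (Yop N q u a 0 d g) k = Yop N q u a 0 d (Bmult N q u a 0 g k)"
proof -
  have "Bmult N q u a 0 (Yop N q u a 0 d g) k = (\<lambda>s. d * Bmult N q u a 0 (Gop N u g) k s + Bmult N q u a 0 (Xop N q u a 0 g) k s)"
    unfolding Yop_def ulin_add[OF Bm_ulin] ulin_scal[OF Bm_ulin] ..
  also have "\<dots> = Yop N q u a 0 d (Bmult N q u a 0 g k)"
    unfolding Bm_G[OF g k] Bm_X[OF g k] Yop_def ..
  finally show ?thesis .
qed

lemma Phi_mult:
  assumes bd: "b = d * (1 - q)" and f: "f \<in> carr N" and h: "h \<in> carr N"
  shows "Phi N q u (a - d ^ N * u) 0 d (Bmult N q u a b f h) =
         Bmult N q u (a - d ^ N * u) 0 (Phi N q u (a - d ^ N * u) 0 d f) (Phi N q u (a - d ^ N * u) 0 d h)"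
proof -
  let ?a = "a - d ^ N * u"
  let ?P = "Phi N q u ?a 0 d" and ?G = "Gop N u" and ?X = "Xop N q u a b" and ?Y = "Yop N q u ?a 0 d"
  have IX: "\<And>g. g \<in> carr N \<Longrightarrow> ?P (?X g) = ?Y (?P g)"
    by (rule Phi_X) (use bd H2_phi in auto)
  have IG: "\<And>g. g \<in> carr N \<Longrightarrow> ?P (?G g) = ?G (?P g)" by (rule Phi_G)
  have Ph: "?P h \<in> carr N" by (rule Phi_carr)
  have "?P (Bmult N q u a b f h) = ?P (\<lambda>s. \<Sum>p\<in>box N. f p * (?G ^^ fst p) ((?X ^^ snd p) h) s)"
    by (simp add: Bmult_def Gop_def Xop_def)
  also have "\<dots> = (\<lambda>s. \<Sum>p\<in>box N. f p * ?P ((?G ^^ fst p) ((?X ^^ snd p) h)) s)"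
    by (rule ulin_sum[OF Phi_ulin])
  also have "\<dots> = (\<lambda>s. \<Sum>p\<in>box N. f p * (?G ^^ fst p) ((?Y ^^ snd p) (?P h)) s)"
  proof -
    have "\<And>m n. ?P ((?G ^^ m) ((?X ^^ n) h)) = (?G ^^ m) ((?Y ^^ n) (?P h))"
    proof -
      fix m n
      have "?P ((?G ^^ m) ((?X ^^ n) h)) = (?G ^^ m) (?P ((?X ^^ n) h))"
        by (rule iter_comm[where P="?P" and A="?G" and B="?G", OF IG Gop_pres pow_carr[OF Xop_pres h]])
      also have "?P ((?X ^^ n) h) = (?Y ^^ n) (?P h)"
        by (rule iter_comm[where P="?P" and A="?X" and B="?Y", OF IX Xop_pres h])
      finally show "?P ((?G ^^ m) ((?X ^^ n) h)) = (?G ^^ m) ((?Y ^^ n) (?P h))" .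
    qed
    then show ?thesis by simp
  qed
  also have "\<dots> = Bmult N q u ?a 0 (?P f) (?P h)"
  proof -
    have Pf: "?P f = (\<lambda>s. \<Sum>p\<in>box N. f p * ?P (bas p) s)"
    proof -
      have "?P f = ?P (\<lambda>s. \<Sum>p\<in>box N. f p * bas p s)"
        using CI_expand[OF finite_box, of f] f by (simp add: carr_CI bas_bs)
      also have "\<dots> = (\<lambda>s. \<Sum>p\<in>box N. f p * ?P (bas p) s)" by (rule ulin_sum[OF Phi_ulin])
      finally show ?thesis .
    qed
    have BP: "\<And>p. p \<in> box N \<Longrightarrow> Bmult N q u ?a 0 (?P (bas p)) (?P h) = (?G ^^ fst p) ((?Y ^^ snd p) (?P h))"
    proof -
      fix p assume p: "p \<in> box N"
      let ?M = "\<lambda>g. Bmult N q u ?a 0 g (?P h)"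
      have MG: "\<And>g. g \<in> carr N \<Longrightarrow> ?M (?G g) = ?G (?M g)" by (rule Bm_G[OF _ Ph])
      have MY: "\<And>g. g \<in> carr N \<Longrightarrow> ?M (?Y g) = ?Y (?M g)" by (rule Bm_Y[OF _ Ph])
      have "?M (?P (bas p)) = ?M ((?G ^^ fst p) ((?Y ^^ snd p) (bas (0, 0))))"
        using p by (simp add: Phi_bas')
      also have "\<dots> = (?G ^^ fst p) (?M ((?Y ^^ snd p) (bas (0, 0))))"
        by (rule iter_comm[where P="?M" and A="?G" and B="?G", OF MG Gop_pres pow_carr[OF Yop_pres e_carr]])
      also have "?M ((?Y ^^ snd p) (bas (0, 0))) = (?Y ^^ snd p) (?M (bas (0, 0)))"
        by (rule iter_comm[where P="?M" and A="?Y" and B="?Y", OF MY Yop_pres e_carr])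
      also have "?M (bas (0, 0)) = ?P h" using N0 by (simp add: Bm_bas)
      finally show "Bmult N q u ?a 0 (?P (bas p)) (?P h) = (?G ^^ fst p) ((?Y ^^ snd p) (?P h))" .
    qed
    have "Bmult N q u ?a 0 (?P f) (?P h) = (\<lambda>s. \<Sum>p\<in>box N. f p * Bmult N q u ?a 0 (?P (bas p)) (?P h) s)"
      unfolding Pf by (rule ulin_sum[OF Bm_ulin])
    also have "\<dots> = (\<lambda>s. \<Sum>p\<in>box N. f p * (?G ^^ fst p) ((?Y ^^ snd p) (?P h)) s)"
      by (rule ext, rule sum.cong) (simp_all add: BP)
    finally show ?thesis by simp
  qed
  finally show ?thesis .
qed

end


definition tns :: "nat \<Rightarrow> ((nat \<times> nat \<Rightarrow> 'a::comm_ring_1) \<Rightarrow> (nat \<times> nat \<Rightarrow> 'a))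
   \<Rightarrow> ((nat \<times> nat \<Rightarrow> 'a) \<Rightarrow> (nat \<times> nat \<Rightarrow> 'a))
   \<Rightarrow> ((nat \<times> nat) \<times> (nat \<times> nat) \<Rightarrow> 'a) \<Rightarrow> (nat \<times> nat) \<times> (nat \<times> nat) \<Rightarrow> 'a" where
  "tns N A B = (\<lambda>F z. \<Sum>x\<in>box N \<times> box N. F x * A (bas (fst x)) (fst z) * B (bas (snd x)) (snd z))"

lemma tens_apply: "tens f h z = f (fst z) * h (snd z)"
  by (cases z) (simp add: tens_def)

lemma finite_IW: "finite (box N \<times> box N)" by (simp add: finite_box)

lemma tens_bs: "tens (bas p) (bas r) = bs (p, r)"
  by (rule ext) (auto simp: tens_apply bas_def bs_def)

lemma carrD: "f \<in> carr N \<Longrightarrow> p \<notin> box N \<Longrightarrow> f p = 0"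
  unfolding carr_def by blast

lemma notin_IW: "z \<notin> box N \<times> box N \<Longrightarrow> fst z \<notin> box N \<or> snd z \<notin> box N"
  by (cases z) auto

lemma tens_CW: "g \<in> carr N \<Longrightarrow> h \<in> carr N \<Longrightarrow> tens g h \<in> CI (box N \<times> box N)"
proof -
  assume g: "g \<in> carr N" and h: "h \<in> carr N"
  have "\<And>z. z \<notin> box N \<times> box N \<Longrightarrow> g (fst z) * h (snd z) = 0"
  proof -
    fix z :: "(nat \<times> nat) \<times> (nat \<times> nat)" assume "z \<notin> box N \<times> box N"
    then have "fst z \<notin> box N \<or> snd z \<notin> box N" by (rule notin_IW)
    then show "g (fst z) * h (snd z) = 0"
    proof
      assume "fst z \<notin> box N" then have "g (fst z) = 0" by (rule carrD[OF g])
      then show ?thesis by simp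
    next
      assume "snd z \<notin> box N" then have "h (snd z) = 0" by (rule carrD[OF h])
      then show ?thesis by simp
    qed
  qed
  then show ?thesis unfolding CI_def tens_apply by blast
qed

lemma tns_ulin: "ulin (tns N A B)"
  unfolding ulin_def tns_def by (simp add: algebra_simps sum.distrib sum_distrib_left)

lemma tns_CW:
  assumes "\<And>p. p \<in> box N \<Longrightarrow> A (bas p) \<in> carr N" "\<And>r. r \<in> box N \<Longrightarrow> B (bas r) \<in> carr N"
  shows "tns N A B F \<in> CI (box N \<times> box N)"
  unfolding CI_def
proof (intro CollectI allI impI)
  fix z :: "(nat \<times> nat) \<times> (nat \<times> nat)" assume z: "z \<notin> box N \<times> box N"
  have "\<And>x. x \<in> box N \<times> box N \<Longrightarrow> A (bas (fst x)) (fst z) * B (bas (snd x)) (snd z) = 0"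
  proof -
    fix x :: "(nat \<times> nat) \<times> (nat \<times> nat)" assume x: "x \<in> box N \<times> box N"
    show "A (bas (fst x)) (fst z) * B (bas (snd x)) (snd z) = 0"
    proof (cases "fst z \<in> box N")
      case True
      then have "snd z \<notin> box N" using notin_IW[OF z] by blast
      have "snd x \<in> box N" using x by (simp add: mem_Times_iff)
      then have "B (bas (snd x)) (snd z) = 0" using carrD[OF assms(2)] \<open>snd z \<notin> box N\<close> by blast
      then show ?thesis by simp
    next
      case False
      have "fst x \<in> box N" using x by (simp add: mem_Times_iff)
      then have "A (bas (fst x)) (fst z) = 0" using carrD[OF assms(1)] False by blast
      then show ?thesis by simp
    qed
  qed
  then show "tns N A B F z = 0" unfolding tns_def by (simp add: mult.assoc)
qed

lemma tns_pres:
  assumes "\<And>p. p \<in> box N \<Longrightarrow> A (bas p) \<in> carr N" "\<And>r. r \<in> box N \<Longrightarrow> B (bas r) \<in> carr N"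
  shows "pres (box N \<times> box N) (tns N A B)"
  unfolding pres_def using assms by (blast intro: tns_CW)

lemma lin_apply:
  assumes "ulin A" "g \<in> carr N"
  shows "A g s = (\<Sum>p\<in>box N. g p * A (bas p) s)"
proof -
  have "A g = A (\<lambda>s. \<Sum>p\<in>box N. g p * bas p s)"
    using CI_expand[OF finite_box, of g] assms(2) by (simp add: carr_CI bas_bs)
  also have "\<dots> = (\<lambda>s. \<Sum>p\<in>box N. g p * A (bas p) s)" by (rule ulin_sum[OF assms(1)])
  finally show ?thesis by simp
qed

lemma tns_tens:
  assumes A: "ulin A" and B: "ulin B" and g: "g \<in> carr N" and h: "h \<in> carr N"
  shows "tns N A B (tens g h) = tens (A g) (B h)"
proof
  fix z :: "(nat \<times> nat) \<times> (nat \<times> nat)"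
  have "tns N A B (tens g h) z = (\<Sum>x\<in>box N \<times> box N. (g (fst x) * A (bas (fst x)) (fst z)) * (h (snd x) * B (bas (snd x)) (snd z)))"
    unfolding tns_def tens_apply by (simp add: algebra_simps)
  also have "\<dots> = (\<Sum>p\<in>box N. g p * A (bas p) (fst z)) * (\<Sum>r\<in>box N. h r * B (bas r) (snd z))"
    by (simp add: sum_product sum.cartesian_product prod.case_eq_if)
  also have "\<dots> = A g (fst z) * B h (snd z)"
    using lin_apply[OF A g] lin_apply[OF B h] by simp
  finally show "tns N A B (tens g h) z = tens (A g) (B h) z" by (simp add: tens_apply)
qed

lemma ueqW:
  assumes "ulin A" "ulin B" "\<And>p r. p \<in> box N \<Longrightarrow> r \<in> box N \<Longrightarrow> A (tens (bas p) (bas r)) = B (tens (bas p) (bas r))"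
    "F \<in> CI (box N \<times> box N)"
  shows "A F = B F"
  by (rule ulin_eq[OF finite_IW assms(1,2) _ assms(4)]) (use assms(3) in \<open>auto simp: tens_bs\<close>)

lemma tns_comp:
  assumes A: "ulin A" and B: "ulin B" and C: "ulin C" and D: "ulin D"
    and Cc: "\<And>p. p \<in> box N \<Longrightarrow> C (bas p) \<in> carr N" and Dc: "\<And>r. r \<in> box N \<Longrightarrow> D (bas r) \<in> carr N"
    and F: "F \<in> CI (box N \<times> box N)"
  shows "tns N A B (tns N C D F) = tns N (\<lambda>f. A (C f)) (\<lambda>f. B (D f)) F"
proof (rule ueqW[OF ulin_comp[OF tns_ulin tns_ulin] tns_ulin _ F])
  fix p r :: "nat \<times> nat" assume pr: "p \<in> box N" "r \<in> box N"
  have c: "bas p \<in> carr N" "bas r \<in> carr N" using pr by (cases p, cases r, simp add: bas_carr)+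
  show "tns N A B (tns N C D (tens (bas p) (bas r))) = tns N (\<lambda>f. A (C f)) (\<lambda>f. B (D f)) (tens (bas p) (bas r))"
    unfolding tns_tens[OF C D c] tns_tens[OF A B Cc[OF pr(1)] Dc[OF pr(2)]]
      tns_tens[OF ulin_comp[OF A C] ulin_comp[OF B D] c] ..
qed

lemma tns_cong:
  assumes "\<And>p. p \<in> box N \<Longrightarrow> A (bas p) = A' (bas p)" "\<And>r. r \<in> box N \<Longrightarrow> B (bas r) = B' (bas r)"
  shows "tns N A B = tns N A' B'"
  unfolding tns_def using assms by (intro ext sum.cong) auto

lemma tns_add1: "tns N (\<lambda>f s. A f s + A' f s) B F = (\<lambda>z. tns N A B F z + tns N A' B F z)"
  unfolding tns_def by (simp add: algebra_simps sum.distrib)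
lemma tns_scal1: "tns N (\<lambda>f s. c * A f s) B F = (\<lambda>z. c * tns N A B F z)"
  unfolding tns_def by (simp add: algebra_simps sum_distrib_left)
lemma tns_scal2: "tns N A (\<lambda>f s. c * B f s) F = (\<lambda>z. c * tns N A B F z)"
  unfolding tns_def by (simp add: algebra_simps sum_distrib_left)

lemma tns_idid: "F \<in> CI (box N \<times> box N) \<Longrightarrow> tns N (\<lambda>f. f) (\<lambda>f. f) F = F"
proof (rule ueqW[OF tns_ulin ulin_id])
  fix p r :: "nat \<times> nat" assume pr: "p \<in> box N" "r \<in> box N"
  have c: "bas p \<in> carr N" "bas r \<in> carr N" using pr by (cases p, cases r, simp add: bas_carr)+
  show "tns N (\<lambda>f. f) (\<lambda>f. f) (tens (bas p) (bas r)) = tens (bas p) (bas r)"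
    by (rule tns_tens[OF ulin_id ulin_id c])
qed

lemma tens_id_tns:
  assumes F: "F \<in> CI (box N \<times> box N)"
  shows "tens_id N \<phi> F = tns N \<phi> (\<lambda>f. f) F"
proof
  fix z :: "(nat \<times> nat) \<times> (nat \<times> nat)"
  obtain s t where z: "z = (s, t)" by (cases z)
  have "tns N \<phi> (\<lambda>f. f) F z = (\<Sum>p\<in>box N. \<Sum>r\<in>box N. F (p, r) * \<phi> (bas p) s * bas r t)"
    unfolding tns_def z by (simp add: sum.cartesian_product prod.case_eq_if)
  also have "\<dots> = (\<Sum>p\<in>box N. F (p, t) * \<phi> (bas p) s)"
  proof (rule sum.cong[OF refl])
    fix p assume p: "p \<in> box N"
    show "(\<Sum>r\<in>box N. F (p, r) * \<phi> (bas p) s * bas r t) = F (p, t) * \<phi> (bas p) s"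
    proof (cases "t \<in> box N")
      case True
      have "(\<Sum>r\<in>box N. F (p, r) * \<phi> (bas p) s * bas r t) = (\<Sum>r\<in>box N. if r = t then F (p, t) * \<phi> (bas p) s else 0)"
        by (rule sum.cong) (auto simp: bas_def)
      also have "\<dots> = F (p, t) * \<phi> (bas p) s" using True finite_box by (simp add: sum.delta)
      finally show ?thesis .
    next
      case False
      then have "(p, t) \<notin> box N \<times> box N" by (simp add: mem_Times_iff)
      then have "F (p, t) = 0" using F unfolding CI_def by blast
      moreover have "\<And>r. r \<in> box N \<Longrightarrow> bas r t = (0::'a)" using False by (auto simp: bas_def)
      ultimately show ?thesis by simp
    qed
  qed
  finally show "tens_id N \<phi> F z = tns N \<phi> (\<lambda>f. f) F z" unfolding z tens_id_def by simp
qed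

lemma tns_pow_tens:
  assumes A: "ulin A" "pres (box N) A" and B: "ulin B" "pres (box N) B"
    and g: "g \<in> carr N" and h: "h \<in> carr N"
  shows "(tns N A B ^^ k) (tens g h) = tens ((A ^^ k) g) ((B ^^ k) h)"
proof (induction k)
  case 0 then show ?case by simp
next
  case (Suc k)
  then show ?case using tns_tens[OF A(1) B(1) pow_carr[OF A(2) g] pow_carr[OF B(2) h]] by simp
qed


definition Lmul :: "nat \<Rightarrow> 'a::comm_ring_1 \<Rightarrow> 'a \<Rightarrow> 'a \<Rightarrow> 'a \<Rightarrow> nat \<times> nat \<Rightarrow> (nat \<times> nat \<Rightarrow> 'a) \<Rightarrow> (nat \<times> nat \<Rightarrow> 'a)" where
  "Lmul N q u a b p = (\<lambda>h. (Gop N u ^^ fst p) ((Xop N q u a b ^^ snd p) h))"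

definition Pop :: "nat \<Rightarrow> 'a::comm_ring_1 \<Rightarrow> 'a \<Rightarrow> 'a \<Rightarrow> 'a \<Rightarrow> ((nat \<times> nat) \<times> (nat \<times> nat) \<Rightarrow> 'a) \<Rightarrow> (nat \<times> nat) \<times> (nat \<times> nat) \<Rightarrow> 'a" where
  "Pop N q u a b = (\<lambda>F z. tns N (Xop N q u a b) (Gop N 1) F z + tns N (\<lambda>f. f) (Xop N q 1 0 0) F z)"

abbreviation EE :: "(nat \<times> nat) \<times> (nat \<times> nat) \<Rightarrow> 'a::comm_ring_1" where
  "EE \<equiv> tens (bas (0, 0)) (bas (0, 0))"

lemma Tmult_eq:
  "Tmult N q u a b F G = (\<lambda>z. \<Sum>x\<in>box N \<times> box N. F x * tns N (Lmul N q u a b (fst x)) (Lmul N q 1 0 0 (snd x)) G z)"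
proof
  fix z :: "(nat \<times> nat) \<times> (nat \<times> nat)"
  obtain s t where z: "z = (s, t)" by (cases z)
  have "Tmult N q u a b F G z = (\<Sum>x\<in>box N \<times> box N. \<Sum>y\<in>box N \<times> box N.
      F x * G y * Bmult N q u a b (bas (fst x)) (bas (fst y)) s * Bmult N q 1 0 0 (bas (snd x)) (bas (snd y)) t)"
    unfolding z Tmult_def by (simp add: prod.case_eq_if)
  also have "\<dots> = (\<Sum>x\<in>box N \<times> box N. \<Sum>y\<in>box N \<times> box N.
      F x * G y * Lmul N q u a b (fst x) (bas (fst y)) s * Lmul N q 1 0 0 (snd x) (bas (snd y)) t)"
    by (intro sum.cong refl) (auto simp: Bm_bas' Lmul_def mem_Times_iff)
  also have "\<dots> = (\<Sum>x\<in>box N \<times> box N. F x * tns N (Lmul N q u a b (fst x)) (Lmul N q 1 0 0 (snd x)) G z)"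
    unfolding z tns_def by (simp add: sum_distrib_left mult.assoc)
  finally show "Tmult N q u a b F G z = (\<Sum>x\<in>box N \<times> box N. F x * tns N (Lmul N q u a b (fst x)) (Lmul N q 1 0 0 (snd x)) G z)" .
qed

lemma Tmult_bs:
  assumes "x0 \<in> box N \<times> box N"
  shows "Tmult N q u a b (bs x0) G = tns N (Lmul N q u a b (fst x0)) (Lmul N q 1 0 0 (snd x0)) G"
proof
  fix z
  have "(\<Sum>x\<in>box N \<times> box N. bs x0 x * tns N (Lmul N q u a b (fst x)) (Lmul N q 1 0 0 (snd x)) G z)
      = (\<Sum>x\<in>box N \<times> box N. if x = x0 then tns N (Lmul N q u a b (fst x0)) (Lmul N q 1 0 0 (snd x0)) G z else 0)"
    by (rule sum.cong) (auto simp: bs_def)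
  also have "\<dots> = tns N (Lmul N q u a b (fst x0)) (Lmul N q 1 0 0 (snd x0)) G z"
    using assms finite_IW by (simp add: sum.delta)
  finally show "Tmult N q u a b (bs x0) G z = tns N (Lmul N q u a b (fst x0)) (Lmul N q 1 0 0 (snd x0)) G z"
    unfolding Tmult_eq by simp
qed

lemma Tmult_add1: "Tmult N q u a b (\<lambda>z. F1 z + F2 z) G = (\<lambda>z. Tmult N q u a b F1 G z + Tmult N q u a b F2 G z)"
  unfolding Tmult_eq by (simp add: algebra_simps sum.distrib)

lemma Lmul_00: "Lmul N q u a b (0, 0) = (\<lambda>h. h)" by (rule ext) (simp add: Lmul_def)
lemma Lmul_10: "Lmul N q u a b (1, 0) = Gop N u" by (rule ext) (simp add: Lmul_def)
lemma Lmul_01: "Lmul N q u a b (0, 1) = Xop N q u a b" by (rule ext) (simp add: Lmul_def)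
lemma Lmul_10': "Lmul N q u a b (Suc 0, 0) = Gop N u" by (rule ext) (simp add: Lmul_def)
lemma Lmul_01': "Lmul N q u a b (0, Suc 0) = Xop N q u a b" by (rule ext) (simp add: Lmul_def)
lemma Lmul_m0: "Lmul N q u a b (m, 0) = Gop N u ^^ m" by (rule ext) (simp add: Lmul_def)

lemma Tmult_rho_g: "2 \<le> N \<Longrightarrow> Tmult N q u a b rho_g = tns N (Gop N u) (Gop N 1)"
  unfolding rho_g_def tens_bs by (rule ext) (subst Tmult_bs, auto simp: Lmul_10 Lmul_10')

lemma Tmult_rho_x: "2 \<le> N \<Longrightarrow> Tmult N q u a b rho_x = Pop N q u a b"
proof (rule ext)
  fix G :: "(nat \<times> nat) \<times> (nat \<times> nat) \<Rightarrow> 'a"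
  assume N: "2 \<le> N"
  have "Tmult N q u a b rho_x G = (\<lambda>z. Tmult N q u a b (bs ((0,0),(0,1))) G z + Tmult N q u a b (bs ((0,1),(1,0))) G z)"
    unfolding rho_x_def tens_bs Tmult_add1 ..
  also have "\<dots> = Pop N q u a b G"
    using N by (simp add: Tmult_bs Lmul_00 Lmul_10 Lmul_01 Lmul_10' Lmul_01' Pop_def add.commute)
  finally show "Tmult N q u a b rho_x G = Pop N q u a b G" .
qed

lemma Tmult_tens_m0: "m < N \<Longrightarrow> Tmult N q u a b (tens (bas (m, 0)) (bas (m, 0))) = tns N (Gop N u ^^ m) (Gop N 1 ^^ m)"
  unfolding tens_bs by (rule ext) (subst Tmult_bs, auto simp: Lmul_m0)

context tq
begin

lemma Tpow_g: "m < N \<Longrightarrow> Tpow N q u a b rho_g m = tens (bas (m, 0)) (bas (m, 0))"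
proof -
  assume m: "m < N"
  have "Tpow N q u a b rho_g m = (tns N (Gop N u) (Gop N 1) ^^ m) EE"
    unfolding Tpow_def Tmult_rho_g[OF N2] ..
  also have "\<dots> = tens ((Gop N u ^^ m) (bas (0, 0))) ((Gop N 1 ^^ m) (bas (0, 0)))"
    by (rule tns_pow_tens[OF Gop_ulin Gop_pres Gop_ulin Gop_pres e_carr e_carr])
  also have "\<dots> = tens (bas (m, 0)) (bas (m, 0))"
    using m Gop_pow_lt[of 0 m N 0 u] Gop_pow_lt[of 0 m N 0 "1::'a"] N0 by simp
  finally show ?thesis .
qed

lemma coact_eq: "coact N q u a b f = (\<lambda>z. \<Sum>p\<in>box N. f p * tns N (Gop N u ^^ fst p) (Gop N 1 ^^ fst p) ((Pop N q u a b ^^ snd p) EE) z)"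
  unfolding coact_def
proof (rule ext, rule sum.cong[OF refl])
  fix z and p :: "nat \<times> nat" assume p: "p \<in> box N"
  then have m: "fst p < N" by (cases p) auto
  show "f p * Tmult N q u a b (Tpow N q u a b rho_g (fst p)) (Tpow N q u a b rho_x (snd p)) z =
        f p * tns N (Gop N u ^^ fst p) (Gop N 1 ^^ fst p) ((Pop N q u a b ^^ snd p) EE) z"
    by (simp only: Tpow_g[OF m] Tmult_tens_m0[OF m]) (simp only: Tpow_def Tmult_rho_x[OF N2])
qed

end


lemma idpow: "((\<lambda>f. f) ^^ k) g = g"
  by (induction k) simp_all

lemma tns_cong':
  assumes "\<And>p. p \<in> box N \<Longrightarrow> A (bas p) = A' (bas p)" "\<And>r. r \<in> box N \<Longrightarrow> B (bas r) = B' (bas r)"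
  shows "tns N A B F = tns N A' B' F"
  unfolding tns_def using assms by (intro ext sum.cong refl) (auto simp: mem_Times_iff)

context tq
begin

lemma bas_carr': "p \<in> box N \<Longrightarrow> bas p \<in> carr N"
  by (cases p) (simp add: bas_carr)

lemma powG_carr: "p \<in> box N \<Longrightarrow> (Gop N u ^^ m) (bas p) \<in> carr N"
  by (rule pow_carr[OF Gop_pres bas_carr'])

lemma Pop_ulin: "ulin (Pop N q u a b)"
  unfolding Pop_def by (rule ulin_plus[OF tns_ulin tns_ulin])

lemma Pop_pres: "pres (box N \<times> box N) (Pop N q u a b)"
  unfolding Pop_def
  by (rule pres_plus[OF tns_pres tns_pres]) (simp_all add: Xop_carr Gop_carr bas_carr')

lemma EE_CW: "EE \<in> CI (box N \<times> box N)"
  by (rule tens_CW[OF e_carr e_carr])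

lemma PowEE_CW: "(Pop N q u a b ^^ n) EE \<in> CI (box N \<times> box N)"
  by (rule presD[OF pres_pow[OF Pop_pres] EE_CW])

lemma tns_pow0: "Q \<in> CI (box N \<times> box N) \<Longrightarrow> tns N (Gop N u ^^ 0) (Gop N 1 ^^ 0) Q = Q"
proof -
  assume Q: "Q \<in> CI (box N \<times> box N)"
  have e: "tns N (Gop N u ^^ 0) (Gop N 1 ^^ 0) = tns N (\<lambda>f. f) (\<lambda>f. f)" by (rule tns_cong) simp_all
  show ?thesis unfolding e by (rule tns_idid[OF Q])
qed

lemma T_pow: "Q \<in> CI (box N \<times> box N) \<Longrightarrow>
   (tns N (Gop N u) (Gop N 1) ^^ m) Q = tns N (Gop N u ^^ m) (Gop N 1 ^^ m) Q"
proof (induction m)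
  case 0 then show ?case by (simp add: tns_idid[OF 0])
next
  case (Suc m)
  have "(tns N (Gop N u) (Gop N 1) ^^ Suc m) Q = tns N (Gop N u) (Gop N 1) (tns N (Gop N u ^^ m) (Gop N 1 ^^ m) Q)"
    using Suc by simp
  also have "\<dots> = tns N (\<lambda>f. Gop N u ((Gop N u ^^ m) f)) (\<lambda>f. Gop N 1 ((Gop N 1 ^^ m) f)) Q"
    by (rule tns_comp[OF Gop_ulin Gop_ulin ulin_pow[OF Gop_ulin] ulin_pow[OF Gop_ulin] powG_carr powG_carr Suc.prems])
  also have "(\<lambda>f. Gop N u ((Gop N u ^^ m) f)) = Gop N u ^^ Suc m" by (rule ext) simp
  also have "(\<lambda>f. Gop N 1 ((Gop N 1 ^^ m) f)) = Gop N 1 ^^ Suc m" by (rule ext) simp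
  finally show ?case .
qed

lemma X0_Gpow: "f \<in> carr N \<Longrightarrow> Xop N q u a 0 ((Gop N u ^^ m) f) = (\<lambda>s. q ^ m * (Gop N u ^^ m) (Xop N q u a 0 f) s)"
  using Y_Gpow[of "Xop N q u a 0" u 0 f m] R3[of _ u a 0] by simp

lemma P_Tcomm:
  assumes Q: "Q \<in> CI (box N \<times> box N)"
  shows "Pop N q u a 0 (tns N (Gop N u ^^ m) (Gop N 1 ^^ m) Q) = (\<lambda>z. q ^ m * tns N (Gop N u ^^ m) (Gop N 1 ^^ m) (Pop N q u a 0 Q) z)"
proof -
  let ?G = "Gop N u" and ?H = "Gop N (1::'a)" and ?X = "Xop N q u a 0" and ?XH = "Xop N q (1::'a) 0 0"
  let ?T = "tns N (?G ^^ m) (?H ^^ m)"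
  have c1: "\<And>p. p \<in> box N \<Longrightarrow> ?X (bas p) \<in> carr N" by (rule Xop_carr)
  have c2: "\<And>p. p \<in> box N \<Longrightarrow> ?H (bas p) \<in> carr N" by (rule Gop_carr)
  have c3: "\<And>p. p \<in> box N \<Longrightarrow> ?XH (bas p) \<in> carr N" by (rule Xop_carr)
  have uG: "ulin (?G ^^ m)" "ulin (?H ^^ m)" by (rule ulin_pow[OF Gop_ulin])+
  have "tns N ?X ?H (?T Q) = tns N (\<lambda>f. ?X ((?G ^^ m) f)) (\<lambda>f. ?H ((?H ^^ m) f)) Q"
    by (rule tns_comp[OF Xop_ulin Gop_ulin uG powG_carr powG_carr Q])
  also have "\<dots> = tns N (\<lambda>f s. q ^ m * (?G ^^ m) (?X f) s) (\<lambda>f. (?H ^^ m) (?H f)) Q"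
    by (rule tns_cong') (simp_all add: X0_Gpow bas_carr' funpow_swap1)
  also have "\<dots> = (\<lambda>z. q ^ m * tns N (\<lambda>f. (?G ^^ m) (?X f)) (\<lambda>f. (?H ^^ m) (?H f)) Q z)"
    by (rule tns_scal1)
  also have "tns N (\<lambda>f. (?G ^^ m) (?X f)) (\<lambda>f. (?H ^^ m) (?H f)) Q = ?T (tns N ?X ?H Q)"
    by (rule tns_comp[OF uG Xop_ulin Gop_ulin c1 c2 Q, symmetric])
  finally have e1: "tns N ?X ?H (?T Q) = (\<lambda>z. q ^ m * ?T (tns N ?X ?H Q) z)" .
  have "tns N (\<lambda>f. f) ?XH (?T Q) = tns N (\<lambda>f. (?G ^^ m) f) (\<lambda>f. ?XH ((?H ^^ m) f)) Q"
    using tns_comp[OF ulin_id Xop_ulin uG powG_carr powG_carr Q] by simp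
  also have "\<dots> = tns N (\<lambda>f. (?G ^^ m) f) (\<lambda>f s. q ^ m * (?H ^^ m) (?XH f) s) Q"
    by (rule tns_cong') (simp_all add: X0_Gpow bas_carr')
  also have "\<dots> = (\<lambda>z. q ^ m * tns N (\<lambda>f. (?G ^^ m) f) (\<lambda>f. (?H ^^ m) (?XH f)) Q z)"
    by (rule tns_scal2)
  also have "tns N (\<lambda>f. (?G ^^ m) f) (\<lambda>f. (?H ^^ m) (?XH f)) Q = ?T (tns N (\<lambda>f. f) ?XH Q)"
    using tns_comp[OF uG ulin_id Xop_ulin bas_carr' c3 Q] by simp
  finally have e2: "tns N (\<lambda>f. f) ?XH (?T Q) = (\<lambda>z. q ^ m * ?T (tns N (\<lambda>f. f) ?XH Q) z)" .
  have "Pop N q u a 0 (?T Q) = (\<lambda>z. q ^ m * ?T (tns N ?X ?H Q) z + q ^ m * ?T (tns N (\<lambda>f. f) ?XH Q) z)"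
    unfolding Pop_def e1 e2 ..
  also have "\<dots> = (\<lambda>z. q ^ m * ?T (Pop N q u a 0 Q) z)"
    unfolding Pop_def ulin_add[OF tns_ulin] by (simp add: algebra_simps)
  finally show ?thesis .
qed

lemma P_N: "(Pop N q u a 0 ^^ N) EE = (\<lambda>z. a * EE z)"
proof -
  let ?H = "Gop N (1::'a)" and ?X = "Xop N q u a 0" and ?XH = "Xop N q (1::'a) 0 0"
  let ?A = "tns N ?X ?H" and ?B = "tns N (\<lambda>f. f) ?XH"
  have Ap: "pres (box N \<times> box N) ?A" by (rule tns_pres) (simp_all add: Xop_carr Gop_carr)
  have Bp: "pres (box N \<times> box N) ?B" by (rule tns_pres) (simp_all add: Xop_carr bas_carr')
  have comm: "\<And>F. F \<in> CI (box N \<times> box N) \<Longrightarrow> ?B (?A F) = (\<lambda>z. q * ?A (?B F) z)"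
  proof -
    fix F :: "(nat \<times> nat) \<times> (nat \<times> nat) \<Rightarrow> 'a" assume F: "F \<in> CI (box N \<times> box N)"
    have "?B (?A F) = tns N (\<lambda>f. ?X f) (\<lambda>f. ?XH (?H f)) F"
      using tns_comp[OF ulin_id Xop_ulin Xop_ulin Gop_ulin Xop_carr Gop_carr F] by simp
    also have "\<dots> = tns N ?X (\<lambda>f s. q * ?H (?XH f) s) F"
      by (rule tns_cong') (simp_all add: R3 bas_carr')
    also have "\<dots> = (\<lambda>z. q * tns N ?X (\<lambda>f. ?H (?XH f)) F z)" by (rule tns_scal2)
    also have "tns N ?X (\<lambda>f. ?H (?XH f)) F = ?A (?B F)"
      using tns_comp[OF Xop_ulin Gop_ulin ulin_id Xop_ulin bas_carr' Xop_carr F] by simp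
    finally show "?B (?A F) = (\<lambda>z. q * ?A (?B F) z)" .
  qed
  have "(Pop N q u a 0 ^^ N) EE = ((\<lambda>g z. ?A g z + ?B g z) ^^ N) EE"
    by (simp add: Pop_def)
  also have "\<dots> = (\<lambda>z. (?A ^^ N) EE z + (?B ^^ N) EE z)"
    by (rule qbinom_N[OF tns_ulin Ap tns_ulin Bp comm EE_CW gbv N0])
  also have "(?A ^^ N) EE = tens ((?X ^^ N) (bas (0, 0))) ((?H ^^ N) (bas (0, 0)))"
    by (rule tns_pow_tens[OF Xop_ulin Xop_pres Gop_ulin Gop_pres e_carr e_carr])
  also have "(?B ^^ N) EE = tens (((\<lambda>f. f) ^^ N) (bas (0, 0))) ((?XH ^^ N) (bas (0, 0)))"
    by (rule tns_pow_tens[OF ulin_id pres_id Xop_ulin Xop_pres e_carr e_carr])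
  finally show ?thesis
    by (simp add: R1[OF e_carr] R2[OF e_carr] idpow tens_def case_prod_unfold mult.assoc)
qed

lemma CO_ulin: "ulin (coact N q u a b)"
  unfolding ulin_def coact_def by (simp add: algebra_simps sum.distrib sum_distrib_left)

lemma CO_bas: "m < N \<Longrightarrow> n < N \<Longrightarrow>
   coact N q u a b (bas (m, n)) = tns N (Gop N u ^^ m) (Gop N 1 ^^ m) ((Pop N q u a b ^^ n) EE)"
proof -
  assume mn: "m < N" "n < N"
  show ?thesis
  proof
    fix z
    have "(\<Sum>p\<in>box N. bas (m, n) p * tns N (Gop N u ^^ fst p) (Gop N 1 ^^ fst p) ((Pop N q u a b ^^ snd p) EE) z)
       = (\<Sum>p\<in>box N. if p = (m, n) then tns N (Gop N u ^^ m) (Gop N 1 ^^ m) ((Pop N q u a b ^^ n) EE) z else 0)"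
      by (rule sum.cong) (auto simp: bas_def)
    also have "\<dots> = tns N (Gop N u ^^ m) (Gop N 1 ^^ m) ((Pop N q u a b ^^ n) EE) z"
      using mn finite_box by (simp add: sum.delta)
    finally show "coact N q u a b (bas (m, n)) z = tns N (Gop N u ^^ m) (Gop N 1 ^^ m) ((Pop N q u a b ^^ n) EE) z"
      unfolding coact_eq by simp
  qed
qed

lemma CO_e: "coact N q u a b (bas (0, 0)) = EE"
  using CO_bas[of 0 0 u a b] N0 tns_pow0[OF EE_CW] by simp

lemma COI_G:
  assumes g: "g \<in> carr N"
  shows "coact N q u a b (Gop N u g) = tns N (Gop N u) (Gop N 1) (coact N q u a b g)"
proof (rule ueq[where N=N, OF ulin_comp[OF CO_ulin Gop_ulin] ulin_comp[OF tns_ulin CO_ulin] _ g])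
  fix m n assume mn: "m < N" "n < N"
  let ?Q = "(Pop N q u a b ^^ n) EE"
  have R: "tns N (Gop N u) (Gop N 1) (coact N q u a b (bas (m, n))) = tns N (Gop N u ^^ Suc m) (Gop N 1 ^^ Suc m) ?Q"
  proof -
    have "tns N (Gop N u) (Gop N 1) (coact N q u a b (bas (m, n))) = tns N (Gop N u) (Gop N 1) (tns N (Gop N u ^^ m) (Gop N 1 ^^ m) ?Q)"
      using mn by (simp only: CO_bas)
    also have "\<dots> = tns N (\<lambda>f. Gop N u ((Gop N u ^^ m) f)) (\<lambda>f. Gop N 1 ((Gop N 1 ^^ m) f)) ?Q"
      by (rule tns_comp[OF Gop_ulin Gop_ulin ulin_pow[OF Gop_ulin] ulin_pow[OF Gop_ulin] powG_carr powG_carr PowEE_CW])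
    also have "(\<lambda>f. Gop N u ((Gop N u ^^ m) f)) = Gop N u ^^ Suc m" by (rule ext) simp
    also have "(\<lambda>f. Gop N 1 ((Gop N 1 ^^ m) f)) = Gop N 1 ^^ Suc m" by (rule ext) simp
    finally show ?thesis .
  qed
  show "coact N q u a b (Gop N u (bas (m, n))) = tns N (Gop N u) (Gop N 1) (coact N q u a b (bas (m, n)))"
  proof (cases "Suc m = N")
    case False
    then show ?thesis unfolding R using mn by (simp add: Gop_bas CO_bas del: funpow.simps)
  next
    case True
    have "coact N q u a b (Gop N u (bas (m, n))) = (\<lambda>z. u * ?Q z)"
      using mn True N0 by (simp add: Gop_bas ulin_scal[OF CO_ulin] CO_bas tns_pow0 PowEE_CW del: funpow.simps)
    also have "\<dots> = tns N (\<lambda>f s. u * f s) (\<lambda>f. f) ?Q"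
      unfolding tns_scal1 tns_idid[OF PowEE_CW] ..
    also have "\<dots> = tns N (Gop N u ^^ N) (Gop N 1 ^^ N) ?Q"
      by (rule tns_cong') (simp_all add: R1 bas_carr')
    finally show ?thesis unfolding R True .
  qed
qed

lemma COI_X:
  assumes g: "g \<in> carr N"
  shows "coact N q u a 0 (Xop N q u a 0 g) = Pop N q u a 0 (coact N q u a 0 g)"
proof (rule ueq[where N=N, OF ulin_comp[OF CO_ulin Xop_ulin] ulin_comp[OF Pop_ulin CO_ulin] _ g])
  fix m n assume mn: "m < N" "n < N"
  let ?T = "tns N (Gop N u ^^ m) (Gop N 1 ^^ m)"
  have R: "Pop N q u a 0 (coact N q u a 0 (bas (m, n))) = (\<lambda>z. q ^ m * ?T ((Pop N q u a 0 ^^ Suc n) EE) z)"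
    using mn by (simp add: CO_bas P_Tcomm PowEE_CW del: funpow.simps) (simp)
  show "coact N q u a 0 (Xop N q u a 0 (bas (m, n))) = Pop N q u a 0 (coact N q u a 0 (bas (m, n)))"
  proof (cases "Suc n = N")
    case False
    then show ?thesis unfolding R using mn
      by (simp add: X0_bas Wv_def ulin_scal[OF CO_ulin] CO_bas del: funpow.simps)
  next
    case True
    have "coact N q u a 0 (Xop N q u a 0 (bas (m, n))) = (\<lambda>z. q ^ m * (a * ?T EE z))"
      using mn True N0 by (simp add: X0_bas Wv_def ulin_scal[OF CO_ulin] CO_bas del: funpow.simps)
    also have "\<dots> = (\<lambda>z. q ^ m * ?T ((Pop N q u a 0 ^^ Suc n) EE) z)"
      unfolding True P_N ulin_scal[OF tns_ulin] ..
    finally show ?thesis unfolding R .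
  qed
qed

end


lemma iterW:
  assumes "\<And>F. F \<in> CI I \<Longrightarrow> T (A F) = B (T F)" "pres I A" "F \<in> CI I"
  shows "T ((A ^^ k) F) = (B ^^ k) (T F)"
proof (induction k)
  case 0 then show ?case by simp
next
  case (Suc k)
  have "T ((A ^^ Suc k) F) = T (A ((A ^^ k) F))" by simp
  also have "\<dots> = B (T ((A ^^ k) F))" using assms(1)[OF presD[OF pres_pow[OF assms(2)] assms(3)]] .
  finally show ?case using Suc by simp
qed

context tq
begin

lemma coact_CW: "coact N q u a b f \<in> CI (box N \<times> box N)"
  unfolding coact_eq
  by (rule CI_sum, rule tns_CW) (simp_all add: powG_carr)

lemma Phi_coact:
  assumes bd: "b = d * (1 - q)" and f: "f \<in> carr N"
  shows "coact N q u (a - d ^ N * u) 0 (Phi N q u (a - d ^ N * u) 0 d f)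
         = tens_id N (Phi N q u (a - d ^ N * u) 0 d) (coact N q u a b f)"
proof -
  let ?a = "a - d ^ N * u"
  let ?P = "Phi N q u ?a 0 d" and ?G = "Gop N u" and ?H = "Gop N (1::'a)"
  let ?X = "Xop N q u a b" and ?X2 = "Xop N q u ?a 0" and ?XH = "Xop N q (1::'a) 0 0"
  let ?Y = "Yop N q u ?a 0 d"
  let ?T = "tns N ?P (\<lambda>f. f)"
  let ?Ph = "\<lambda>F z. tns N ?Y ?H F z + tns N (\<lambda>f. f) ?XH F z"
  let ?CO = "coact N q u ?a 0"
  have IX: "\<And>g. g \<in> carr N \<Longrightarrow> ?P (?X g) = ?Y (?P g)"
    by (rule Phi_X) (use bd H2_phi in auto)
  have IG: "\<And>g. g \<in> carr N \<Longrightarrow> ?P (?G g) = ?G (?P g)" by (rule Phi_G)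
  have Php: "pres (box N \<times> box N) ?Ph"
    by (rule pres_plus[OF tns_pres tns_pres]) (simp_all add: Yop_carr Gop_carr Xop_carr bas_carr')
  have S1: "\<And>F. F \<in> CI (box N \<times> box N) \<Longrightarrow> ?T (Pop N q u a b F) = ?Ph (?T F)"
  proof -
    fix F :: "(nat \<times> nat) \<times> (nat \<times> nat) \<Rightarrow> 'a" assume F: "F \<in> CI (box N \<times> box N)"
    have a1: "?T (tns N ?X ?H F) = tns N (\<lambda>f. ?P (?X f)) ?H F"
      using tns_comp[OF Phi_ulin ulin_id Xop_ulin Gop_ulin Xop_carr Gop_carr F] by simp
    have a2: "tns N ?Y ?H (?T F) = tns N (\<lambda>f. ?Y (?P f)) ?H F"
      using tns_comp[OF Yop_ulin Gop_ulin Phi_ulin ulin_id Phi_carr bas_carr' F] by simp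
    have a3: "tns N (\<lambda>f. ?P (?X f)) ?H F = tns N (\<lambda>f. ?Y (?P f)) ?H F"
      by (rule tns_cong') (simp_all add: IX bas_carr')
    have b1: "?T (tns N (\<lambda>f. f) ?XH F) = tns N ?P ?XH F"
      using tns_comp[OF Phi_ulin ulin_id ulin_id Xop_ulin bas_carr' Xop_carr F] by simp
    have b2: "tns N (\<lambda>f. f) ?XH (?T F) = tns N ?P ?XH F"
      using tns_comp[OF ulin_id Xop_ulin Phi_ulin ulin_id Phi_carr bas_carr' F] by simp
    show "?T (Pop N q u a b F) = ?Ph (?T F)"
      unfolding Pop_def ulin_add[OF tns_ulin] a1 a2 a3 b1 b2 ..
  qed
  have TE: "?T EE = EE"
  proof -
    have "?P (bas (0, 0)) = bas (0, 0)" using N0 by (simp add: Phi_bas)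
    then show ?thesis using tns_tens[OF Phi_ulin[of N q u ?a 0 d] ulin_id e_carr e_carr] by simp
  qed
  have S4: "\<And>m Q. Q \<in> CI (box N \<times> box N) \<Longrightarrow> ?T (tns N (?G ^^ m) (?H ^^ m) Q) = tns N (?G ^^ m) (?H ^^ m) (?T Q)"
  proof -
    fix m and Q :: "(nat \<times> nat) \<times> (nat \<times> nat) \<Rightarrow> 'a" assume Q: "Q \<in> CI (box N \<times> box N)"
    have "?T (tns N (?G ^^ m) (?H ^^ m) Q) = tns N (\<lambda>f. ?P ((?G ^^ m) f)) (\<lambda>f. (?H ^^ m) f) Q"
      using tns_comp[OF Phi_ulin ulin_id ulin_pow[OF Gop_ulin] ulin_pow[OF Gop_ulin] powG_carr powG_carr Q] by simp
    also have "\<dots> = tns N (\<lambda>f. (?G ^^ m) (?P f)) (\<lambda>f. (?H ^^ m) f) Q"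
      by (rule tns_cong')
        (simp_all add: iter_comm[where P="?P" and A="?G" and B="?G", OF IG Gop_pres] bas_carr')
    also have "\<dots> = tns N (?G ^^ m) (?H ^^ m) (?T Q)"
      using tns_comp[OF ulin_pow[OF Gop_ulin] ulin_pow[OF Gop_ulin] Phi_ulin ulin_id Phi_carr bas_carr' Q] by simp
    finally show "?T (tns N (?G ^^ m) (?H ^^ m) Q) = tns N (?G ^^ m) (?H ^^ m) (?T Q)" .
  qed
  have COY: "\<And>g. g \<in> carr N \<Longrightarrow> ?CO (?Y g) = ?Ph (?CO g)"
  proof -
    fix g :: "nat \<times> nat \<Rightarrow> 'a" assume g: "g \<in> carr N"
    have "?CO (?Y g) = (\<lambda>z. d * ?CO (?G g) z + ?CO (?X2 g) z)"
      unfolding Yop_def ulin_add[OF CO_ulin] ulin_scal[OF CO_ulin] ..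
    also have "\<dots> = (\<lambda>z. d * tns N ?G ?H (?CO g) z + Pop N q u ?a 0 (?CO g) z)"
      unfolding COI_G[OF g] COI_X[OF g] ..
    also have "\<dots> = ?Ph (?CO g)"
      unfolding Yop_def Pop_def tns_add1 tns_scal1 by (simp add: algebra_simps)
    finally show "?CO (?Y g) = ?Ph (?CO g)" .
  qed
  have RHS: "tens_id N ?P (coact N q u a b f) = (\<lambda>z. \<Sum>p\<in>box N. f p * tns N (?G ^^ fst p) (?H ^^ fst p) ((?Ph ^^ snd p) EE) z)"
  proof -
    have "tens_id N ?P (coact N q u a b f) = ?T (coact N q u a b f)"
      by (rule tens_id_tns[OF coact_CW])
    also have "\<dots> = (\<lambda>z. \<Sum>p\<in>box N. f p * ?T (tns N (?G ^^ fst p) (?H ^^ fst p) ((Pop N q u a b ^^ snd p) EE)) z)"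
      unfolding coact_eq by (rule ulin_sum[OF tns_ulin])
    also have "\<dots> = (\<lambda>z. \<Sum>p\<in>box N. f p * tns N (?G ^^ fst p) (?H ^^ fst p) ((?Ph ^^ snd p) EE) z)"
    proof -
      have "\<And>m n. ?T (tns N (?G ^^ m) (?H ^^ m) ((Pop N q u a b ^^ n) EE)) = tns N (?G ^^ m) (?H ^^ m) ((?Ph ^^ n) EE)"
      proof -
        fix m n
        have "?T ((Pop N q u a b ^^ n) EE) = (?Ph ^^ n) (?T EE)"
          by (rule iterW[where T="?T", OF S1 Pop_pres EE_CW])
        then show "?T (tns N (?G ^^ m) (?H ^^ m) ((Pop N q u a b ^^ n) EE)) = tns N (?G ^^ m) (?H ^^ m) ((?Ph ^^ n) EE)"
          using S4[OF PowEE_CW] TE by simp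
      qed
      then show ?thesis by simp
    qed
    finally show ?thesis .
  qed
  have LHS: "?CO (?P f) = (\<lambda>z. \<Sum>p\<in>box N. f p * tns N (?G ^^ fst p) (?H ^^ fst p) ((?Ph ^^ snd p) EE) z)"
  proof -
    have Pf: "?P f = (\<lambda>s. \<Sum>p\<in>box N. f p * ?P (bas p) s)"
      by (rule ext) (rule lin_apply[OF Phi_ulin f])
    have "?CO (?P f) = (\<lambda>z. \<Sum>p\<in>box N. f p * ?CO (?P (bas p)) z)"
      unfolding Pf by (rule ulin_sum[OF CO_ulin])
    also have "\<dots> = (\<lambda>z. \<Sum>p\<in>box N. f p * tns N (?G ^^ fst p) (?H ^^ fst p) ((?Ph ^^ snd p) EE) z)"
    proof -
      have "\<And>p. p \<in> box N \<Longrightarrow> ?CO (?P (bas p)) = tns N (?G ^^ fst p) (?H ^^ fst p) ((?Ph ^^ snd p) EE)"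
      proof -
        fix p :: "nat \<times> nat" assume p: "p \<in> box N"
        have "?CO (?P (bas p)) = ?CO ((?G ^^ fst p) ((?Y ^^ snd p) (bas (0, 0))))"
          using p by (simp add: Phi_bas')
        also have "\<dots> = (tns N ?G ?H ^^ fst p) (?CO ((?Y ^^ snd p) (bas (0, 0))))"
          by (rule iter_comm[where P="?CO" and A="?G" and B="tns N ?G ?H", OF COI_G Gop_pres pow_carr[OF Yop_pres e_carr]])
        also have "?CO ((?Y ^^ snd p) (bas (0, 0))) = (?Ph ^^ snd p) (?CO (bas (0, 0)))"
          by (rule iter_comm[where P="?CO" and A="?Y" and B="?Ph", OF COY Yop_pres e_carr])
        also have "?CO (bas (0, 0)) = EE" by (rule CO_e)
        also have "(tns N ?G ?H ^^ fst p) ((?Ph ^^ snd p) EE) = tns N (?G ^^ fst p) (?H ^^ fst p) ((?Ph ^^ snd p) EE)"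
          by (rule T_pow[OF presD[OF pres_pow[OF Php] EE_CW]])
        finally show "?CO (?P (bas p)) = tns N (?G ^^ fst p) (?H ^^ fst p) ((?Ph ^^ snd p) EE)" .
      qed
      then show ?thesis by (intro ext sum.cong refl) simp
    qed
    finally show ?thesis .
  qed
  show ?thesis unfolding LHS RHS ..
qed

end


theorem corollary1p6:
  fixes N :: nat and q u a b :: "'a::comm_ring_1"
  assumes "N \<ge> 2"
    and "poly (map_poly of_int (cyclo N)) q = 0"
    and "u dvd 1"
    and "(1 - q) dvd 1"
  shows "\<exists>a' \<phi>. comod_alg_iso N q (u, a, b) (u, a', 0) \<phi>"
proof -
  obtain w where w: "1 = (1 - q) * w" using assms(4) by (auto elim: dvdE)
  interpret tq N q
  proof
    show "2 \<le> N" by (rule assms(1))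
    show "q ^ N = 1" by (rule qfacts(2)[OF assms(1,2)])
    show "qs q N = 0" unfolding qs_def by (rule qfacts(1)[OF assms(1,2)])
    show "\<And>k. 0 < k \<Longrightarrow> k < N \<Longrightarrow> gb q N k = 0" by (rule gb_vanish[OF assms(1,2)])
  qed
  define d where "d = b * w"
  define a' where "a' = a - d ^ N * u"
  define \<phi> where "\<phi> = Phi N q u a' 0 d"
  define \<psi> where "\<psi> = Phi N q u a b (- d)"
  have "d * (1 - q) = b * ((1 - q) * w)" unfolding d_def by (simp add: algebra_simps)
  also have "\<dots> = b" unfolding w[symmetric] by simp
  finally have bd: "b = d * (1 - q)" by simp
  have bd2: "b - d * (1 - q) = 0" using bd by simp
  have IGphi: "\<And>f. f \<in> carr N \<Longrightarrow> \<phi> (Gop N u f) = Gop N u (\<phi> f)" unfolding \<phi>_def by (rule Phi_G)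
  have IXphi: "\<And>f. f \<in> carr N \<Longrightarrow> \<phi> (Xop N q u a b f) = Yop N q u a' 0 d (\<phi> f)"
    unfolding \<phi>_def a'_def by (rule Phi_X) (use bd H2_phi in auto)
  have IGpsi: "\<And>f. f \<in> carr N \<Longrightarrow> \<psi> (Gop N u f) = Gop N u (\<psi> f)" unfolding \<psi>_def by (rule Phi_G)
  have IXpsi: "\<And>f. f \<in> carr N \<Longrightarrow> \<psi> (Xop N q u a' 0 f) = Yop N q u a b (- d) (\<psi> f)"
    unfolding \<psi>_def a'_def by (rule Phi_X) (use bd2 H2_psi[OF bd2] in auto)
  have inv1: "\<And>f. f \<in> carr N \<Longrightarrow> \<psi> (\<phi> f) = f"
    unfolding \<psi>_def \<phi>_def by (rule roundtrip[OF _ IGpsi[unfolded \<psi>_def] IXpsi[unfolded \<psi>_def]]) simp_all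
  have inv2: "\<And>f. f \<in> carr N \<Longrightarrow> \<phi> (\<psi> f) = f"
    unfolding \<psi>_def \<phi>_def by (rule roundtrip[OF _ IGphi[unfolded \<phi>_def] IXphi[unfolded \<phi>_def]]) simp_all
  have bij: "bij_betw \<phi> (carr N) (carr N)"
  proof (rule bij_betw_byWitness[where f' = \<psi>])
    show "\<forall>x\<in>carr N. \<psi> (\<phi> x) = x" using inv1 by blast
    show "\<forall>y\<in>carr N. \<phi> (\<psi> y) = y" using inv2 by blast
    show "\<phi> ` carr N \<subseteq> carr N" unfolding \<phi>_def using Phi_carr by blast
    show "\<psi> ` carr N \<subseteq> carr N" unfolding \<psi>_def using Phi_carr by blast
  qed
  have "comod_alg_iso N q (u, a, b) (u, a', 0) \<phi>"
    unfolding comod_alg_iso_def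
  proof (simp only: prod.case, intro conjI ballI allI)
    show "bij_betw \<phi> (carr N) (carr N)" by (rule bij)
    show "\<And>f h. \<phi> (\<lambda>s. f s + h s) = (\<lambda>s. \<phi> f s + \<phi> h s)"
      unfolding \<phi>_def by (rule ulin_add[OF Phi_ulin])
    show "\<And>c f. \<phi> (\<lambda>s. c * f s) = (\<lambda>s. c * \<phi> f s)"
      unfolding \<phi>_def by (rule ulin_scal[OF Phi_ulin])
    show "\<phi> (bas (0, 0)) = bas (0, 0)" unfolding \<phi>_def using N0 by (simp add: Phi_bas)
    show "\<And>f h. f \<in> carr N \<Longrightarrow> h \<in> carr N \<Longrightarrow> \<phi> (Bmult N q u a b f h) = Bmult N q u a' 0 (\<phi> f) (\<phi> h)"
      unfolding \<phi>_def a'_def by (rule Phi_mult[OF bd])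
    show "\<And>f. f \<in> carr N \<Longrightarrow> coact N q u a' 0 (\<phi> f) = tens_id N \<phi> (coact N q u a b f)"
      unfolding \<phi>_def a'_def by (rule Phi_coact[OF bd])
  qed
  then show ?thesis by blast
qed


end
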